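(* Assume (HN.1), (HN.2), (HO), (HI). Then for $i,j\in\{0,1\}$, almost surely, $$\lim_{n\to\infty}\frac1{\pi^n}\sum_{k\in\mathbb T_n^i\setminus\mathbb T_0}\varepsilon_k^2\delta_{2k+j}=\sigma^2p_{ij}\frac{\pi}{\pi-1}Wz^i,\qquad \lim_{n\to\infty}\frac1{\pi^n}\sum_{k\in\mathbb T_n\setminus\mathbb T_0}\delta_{2k}\delta_{2k+1}\varepsilon_{2k}\varepsilon_{2k+1}=\rho\,\bar p(1,1)\frac{\pi}{\pi-1}W,$$ where $\bar p(1,1)=p^{(0)}(1,1)z^0+p^{(1)}(1,1)z^1$.
   Context: Tree notation: individuals labelled by $\mathbb{T}=\mathbb{N}^*$, $k$ has daughters $2k$ (type 0) and $2k+1$ (type 1); $\mathbb{G}_n=\{2^n,\dots,2^{n+1}-1\}$, $\mathbb{T}_n=\bigcup_{\ell=0}^n\mathbb{G}_\ell$, $\mathbb{T}^0=\mathbb{T}\cap 2\mathbb{N}$, $\mathbb{T}^1=\mathbb{T}\cap(2\mathbb{N}+1)$, $\mathbb T_n^i=\mathbb T_n\cap\mathbb T^i$. BAR process: $\mathbb E[X_1^8]<\infty$ and for $k\ge1$, $X_{2k}=a+bX_k+\varepsilon_{2k}$, $X_{2k+1}=c+dX_k+\varepsilon_{2k+1}$, $(a,b,c,d)\in\mathbb R^4$, $0<\max(|b|,|d|)<1$; $\mathcal F_n=\sigma(X_k,k\in\mathbb T_n)$. (HN.1): for all $n\ge0$, $k\in\mathbb G_{n+1}$, $\varepsilon_k\in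 L^8$ and a.s. $\mathbb E[\varepsilon_k|\mathcal F_n]=0$, $\mathbb E[\varepsilon_k^2|\mathcal F_n]=\sigma^2$, $\mathbb E[\varepsilon_k^4|\mathcal F_n]=\tau^4$, $\mathbb E[\varepsilon_k^8|\mathcal F_n]=\kappa^8$ with $\sigma^2,\tau^4,\kappa^8\in(0,\infty)$; and for $k\in\mathbb G_n$, $\mathbb E[\varepsilon_{2k}\varepsilon_{2k+1}|\mathcal F_n]=\rho=\rho'\sigma^2$, $\mathbb E[\varepsilon_{2k}^2\varepsilon_{2k+1}^2|\mathcal F_n]=\nu^2\tau^4$, $\mathbb E[\varepsilon_{2k}^4\varepsilon_{2k+1}^4|\mathcal F_n]=\lambda^4\kappa^8$ with $|\rho'|,\nu^2,\lambda^4\in[0,1)$. (HN.2): for each $n\ge0$ the vectors $(\varepsilon_{2k},\varepsilon_{2k+1})$, $k\in\mathbb G_n$, are conditionally independent given $\mathcal F_n$. Observation process: $\delta_1=1$, $\delta_{2k}=\delta_k\zeta_k^0$, $\delta_{2k+1}=\delta_k\zeta_k^1$, with $\boldsymbol\zeta_k=(\zeta_k^0,\zeta_k^1)\in\{0,1\}^2$ independent, common law $p^{(0)}(j_0,j_1)=\mathbb P(\boldsymbol\zeta_k=(j_0,j_1))$ for even $k$ and $p^{(1)}$ for odd $k$; $p_{i0}=p^{(i)}(1,0)+p^{(i)}(1,1)$, $p_{i1}=p^{(i)}(0,1)+p^{(i)}(1,1)$, $\boldsymbol P=(p_{ij})$. (HO): all $p_{ij}>0$ and the Perron eigenvalue $\pi$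 of $\boldsymbol P$ satisfies $\pi>1$; $\boldsymbol z=(z^0,z^1)$ is the positive left eigenvector for $\pi$ with $z^0+z^1=1$. (HI): $(\delta_k)$, $(\boldsymbol\zeta_k)$ are independent of $(X_k)$, $(\varepsilon_k)$. With $Z_n^i=|\{k\in\mathbb G_n\cap\mathbb T^i:\delta_k=1\}|$, $W$ denotes the nonnegative random variable with $(Z_n^0,Z_n^1)/\pi^n\to W\boldsymbol z$ a.s. *)

theory Defs
  imports "HOL-Probability.Probability"
begin

text \<open>Tree notation: individuals are labelled by positive naturals.\<close>

definition genG :: "nat \<Rightarrow> nat set" where
  "genG n = {2^n..<2^(Suc n)}"

definition treeT :: "nat \<Rightarrow> nat set" where
  "treeT n = {1..<2^(Suc n)}"

definition natF :: "'a measure \<Rightarrow> (nat \<Rightarrow> 'a \<Rightarrow> real) \<Rightarrow> nat \<Rightarrow> 'a measure" where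
  "natF M X n = sigma (space M) {X k -` A \<inter> space M | k A. k \<in> treeT n \<and> A \<in> sets borel}"

definition cond_indep_given ::
  "'a measure \<Rightarrow> 'a measure \<Rightarrow> ('i \<Rightarrow> 'a \<Rightarrow> 'b::topological_space) \<Rightarrow> 'i set \<Rightarrow> bool" where
  "cond_indep_given M F Y I \<longleftrightarrow>
     (\<forall>J B. J \<subseteq> I \<longrightarrow> finite J \<longrightarrow> (\<forall>j\<in>J. B j \<in> sets borel) \<longrightarrow>
        (AE \<omega> in M. real_cond_exp M F (\<lambda>x. \<Prod>j\<in>J. indicator (B j) (Y j x)) \<omega>
                    = (\<Prod>j\<in>J. real_cond_exp M F (\<lambda>x. indicator (B j) (Y j x)) \<omega>)))"

definition Pmat :: "(nat \<Rightarrow> nat \<Rightarrow> nat \<Rightarrow> real) \<Rightarrow> nat \<Rightarrow> nat \<Rightarrow> real" where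
  "Pmat p i j = (if j = 0 then p i 1 0 + p i 1 1 else p i 0 1 + p i 1 1)"

end

theory Submission
  imports Defs
begin


locale bar = prob_space M
  for M :: "'a measure" +
  fixes X eps :: "nat \<Rightarrow> 'a \<Rightarrow> real"
    and zeta :: "nat \<Rightarrow> 'a \<Rightarrow> nat \<times> nat"
    and delta :: "nat \<Rightarrow> 'a \<Rightarrow> nat"
    and a b c d sigma2 tau4 rhop nu2 pi :: real
    and p :: "nat \<Rightarrow> nat \<Rightarrow> nat \<Rightarrow> real"
    and z :: "nat \<Rightarrow> real"
    and W :: "'a \<Rightarrow> real"
  assumes X_meas: "\<And>k. k \<ge> 1 \<Longrightarrow> X k \<in> borel_measurable M"
    and BAR0: "\<And>k \<omega>. k \<ge> 1 \<Longrightarrow> X (2*k) \<omega> = a + b * X k \<omega> + eps (2*k) \<omega>"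
    and BAR1: "\<And>k \<omega>. k \<ge> 1 \<Longrightarrow> X (2*k+1) \<omega> = c + d * X k \<omega> + eps (2*k+1) \<omega>"
    and eps_L8: "\<And>n k. k \<in> genG (Suc n) \<Longrightarrow> integrable M (\<lambda>\<omega>. (eps k \<omega>) ^ 8)"
    and ce2: "\<And>n k. k \<in> genG (Suc n) \<Longrightarrow>
               AE \<omega> in M. real_cond_exp M (natF M X n) (\<lambda>x. (eps k x)^2) \<omega> = sigma2"
    and ce4: "\<And>n k. k \<in> genG (Suc n) \<Longrightarrow>
               AE \<omega> in M. real_cond_exp M (natF M X n) (\<lambda>x. (eps k x)^4) \<omega> = tau4"
    and cc1: "\<And>n k. k \<in> genG n \<Longrightarrow>
               AE \<omega> in M. real_cond_exp M (natF M X n) (\<lambda>x. eps (2*k) x * eps (2*k+1) x) \<omega>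
                             = rhop * sigma2"
    and HN2: "\<And>n. cond_indep_given M (natF M X n)
                    (\<lambda>k x. (eps (2*k) x, eps (2*k+1) x)) (genG n)"
    and zeta_val: "\<And>k \<omega>. k \<ge> 1 \<Longrightarrow> zeta k \<omega> \<in> {0,1} \<times> {0,1}"
    and zeta_indep: "indep_vars (\<lambda>_. count_space UNIV) zeta {1..}"
    and zeta_law: "\<And>k j0 j1. k \<ge> 1 \<Longrightarrow> j0 \<in> {0,1} \<Longrightarrow> j1 \<in> {0,1} \<Longrightarrow>
                    measure M {\<omega> \<in> space M. zeta k \<omega> = (j0, j1)} = p (k mod 2) j0 j1"
    and delta1: "\<And>\<omega>. delta 1 \<omega> = 1"
    and delta0: "\<And>k \<omega>. k \<ge> 1 \<Longrightarrow> delta (2*k) \<omega> = delta k \<omega> * fst (zeta k \<omega>)"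
    and delta_1: "\<And>k \<omega>. k \<ge> 1 \<Longrightarrow> delta (2*k+1) \<omega> = delta k \<omega> * snd (zeta k \<omega>)"
    and P_pos: "\<And>i j. i \<in> {0,1} \<Longrightarrow> j \<in> {0,1} \<Longrightarrow> Pmat p i j > 0"
    and pi_gt1: "pi > 1"
    and z_pos: "z 0 > 0" "z 1 > 0"
    and z_eig: "\<And>j. j \<in> {0,1} \<Longrightarrow> z 0 * Pmat p 0 j + z 1 * Pmat p 1 j = pi * z j"
    and HI: "indep_set
               (sets (sigma (space M) {zeta k -` A \<inter> space M | k A. k \<ge> 1}))
               (sets (sigma (space M) {X k -` A \<inter> space M | k A. k \<ge> 1 \<and> A \<in> sets borel}))"
    and W_lim: "AE \<omega> in M. \<forall>i\<in>{0,1}.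
                  (\<lambda>n. real (card {k \<in> genG n. k mod 2 = i \<and> delta k \<omega> = 1}) / pi ^ n)
                    \<longlonglongrightarrow> W \<omega> * z i"
begin

lemma genG_ge1: "k \<in> genG n \<Longrightarrow> 1 \<le> k"
  unfolding genG_def by (auto simp: Suc_le_eq intro: order.strict_trans2[of 0 "2^n"])

lemma genG_child: "q \<in> genG n \<Longrightarrow> j < 2 \<Longrightarrow> 2*q+j \<in> genG (Suc n)"
  unfolding genG_def by auto

lemma natF_sub: "subalgebra M (natF M X n)"
proof -
  have G: "{X k -` A \<inter> space M | k A. k \<in> treeT n \<and> A \<in> sets borel} \<subseteq> sets M"
    using X_meas unfolding treeT_def by (auto simp: measurable_sets)
  have G': "{X k -` A \<inter> space M | k A. k \<in> treeT n \<and> A \<in> sets borel} \<subseteq> Pow (space M)"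
    by auto
  have "sets (natF M X n) \<subseteq> sets M"
    unfolding natF_def sets_measure_of[OF G'] by (rule sets.sigma_sets_subset[OF G])
  moreover have "space (natF M X n) = space M"
    unfolding natF_def using G sets.sets_into_space by (subst space_measure_of) auto
  ultimately show ?thesis unfolding subalgebra_def by simp
qed

lemma natF_sfs: "sigma_finite_subalgebra M (natF M X n)"
proof -
  interpret finite_measure_subalgebra M "natF M X n"
    by unfold_locales (rule natF_sub)
  show ?thesis by unfold_locales
qed

definition XS where "XS = sigma (space M) {X k -` A \<inter> space M | k A. k \<ge> 1 \<and> A \<in> sets borel}"
definition ZH where "ZH = sigma (space M) {zeta k -` A \<inter> space M | k A. k \<ge> 1}"
definition Ez where "Ez r = {zeta r -` A \<inter> space M | A. A \<in> sets (count_space UNIV)}"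
definition ZS where "ZS I = sigma (space M) (\<Union>r\<in>I. sigma_sets (space M) (Ez r))"

lemma XS_space: "space XS = space M" unfolding XS_def by (subst space_measure_of) auto
lemma ZH_space: "space ZH = space M" unfolding ZH_def by (subst space_measure_of) auto
lemma ZS_space: "space (ZS I) = space M" unfolding ZS_def
  by (subst space_measure_of) (auto dest: sigma_sets_into_sp[rotated] simp: Ez_def)

lemma XS_sets: "sets XS = sigma_sets (space M) {X k -` A \<inter> space M | k A. k \<ge> 1 \<and> A \<in> sets borel}"
  unfolding XS_def by (subst sets_measure_of) auto
lemma ZH_sets: "sets ZH = sigma_sets (space M) {zeta k -` A \<inter> space M | k A. k \<ge> 1}"
  unfolding ZH_def by (subst sets_measure_of) auto
lemma ZS_sets: "sets (ZS I) = sigma_sets (space M) (\<Union>r\<in>I. sigma_sets (space M) (Ez r))"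
  unfolding ZS_def by (subst sets_measure_of) (auto dest: sigma_sets_into_sp[rotated] simp: Ez_def)

lemma X_XS: "k \<ge> 1 \<Longrightarrow> X k \<in> borel_measurable XS"
  by (rule measurableI) (auto simp: XS_space XS_sets)

lemma zeta_ZH: "k \<ge> 1 \<Longrightarrow> zeta k \<in> measurable ZH (count_space UNIV)"
  by (rule measurableI) (auto simp: ZH_space ZH_sets)

lemma zeta_ZS: "k \<in> I \<Longrightarrow> zeta k \<in> measurable (ZS I) (count_space UNIV)"
  apply (rule measurableI)
   apply (simp_all add: ZS_space ZS_sets)
  apply (rule sigma_sets.Basic)
  apply (rule UN_I, assumption)
  apply (rule sigma_sets.Basic)
  apply (auto simp: Ez_def)
  done

lemma zeta_meas: "k \<ge> 1 \<Longrightarrow> zeta k \<in> measurable M (count_space UNIV)"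
  using zeta_indep unfolding indep_vars_def by auto

lemma eps_eq0: "q \<ge> 1 \<Longrightarrow> eps (2*q) \<omega> = X (2*q) \<omega> - a - b * X q \<omega>"
  using BAR0[of q \<omega>] by simp
lemma eps_eq1: "q \<ge> 1 \<Longrightarrow> eps (2*q+1) \<omega> = X (2*q+1) \<omega> - c - d * X q \<omega>"
  using BAR1[of q \<omega>] by simp

lemma eps_XS: assumes "k \<ge> 2" shows "eps k \<in> borel_measurable XS"
proof -
  obtain q j where k: "k = 2*q+j" "j < 2" "q \<ge> 1"
    using assms by (intro that[of "k div 2" "k mod 2"]) auto
  show ?thesis
  proof (cases "j = 0")
    case True
    then have "eps k = (\<lambda>\<omega>. X (2*q) \<omega> - a - b * X q \<omega>)" using k eps_eq0 by auto
    then show ?thesis using X_XS[of q] X_XS[of "2*q"] k by simp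
  next
    case False
    then have "j = 1" using k by auto
    then have "eps k = (\<lambda>\<omega>. X (2*q+1) \<omega> - c - d * X q \<omega>)" using k eps_eq1 by auto
    then show ?thesis using X_XS[of q] X_XS[of "2*q+1"] k by simp
  qed
qed

lemma XS_sub: "sets XS \<subseteq> sets M"
  unfolding XS_sets
proof (rule sets.sigma_sets_subset)
  show "{X k -` A \<inter> space M | k A. k \<ge> 1 \<and> A \<in> sets borel} \<subseteq> sets M"
    using X_meas by (auto simp: measurable_sets)
qed

lemma XS_subalg: "subalgebra M XS" unfolding subalgebra_def using XS_sub XS_space by auto

lemma ZH_sub: "sets ZH \<subseteq> sets M"
  unfolding ZH_sets
proof (rule sets.sigma_sets_subset)
  show "{zeta k -` A \<inter> space M | k A. k \<ge> 1} \<subseteq> sets M"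
    using zeta_meas by (auto simp: measurable_sets)
qed
lemma ZH_subalg: "subalgebra M ZH" unfolding subalgebra_def using ZH_sub ZH_space by auto

lemma ZS_sub: assumes "I \<subseteq> {1..}" shows "sets (ZS I) \<subseteq> sets M"
  unfolding ZS_sets
proof (rule sets.sigma_sets_subset, rule UN_least)
  fix r assume "r \<in> I"
  then have "Ez r \<subseteq> sets M" using zeta_meas[of r] assms unfolding Ez_def by (auto simp: measurable_sets)
  then show "sigma_sets (space M) (Ez r) \<subseteq> sets M" by (rule sets.sigma_sets_subset)
qed
lemma ZS_subalg: "I \<subseteq> {1..} \<Longrightarrow> subalgebra M (ZS I)" unfolding subalgebra_def using ZS_sub ZS_space by auto

lemma eps_meas: "k \<ge> 2 \<Longrightarrow> eps k \<in> borel_measurable M"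
  using measurable_from_subalg[OF XS_subalg eps_XS] .

lemma delta_meas_gen:
  assumes "space N = space M" and "\<And>r. 1 \<le> r \<Longrightarrow> r < m \<Longrightarrow> zeta r \<in> measurable N (count_space UNIV)"
  shows "1 \<le> k \<Longrightarrow> k \<le> m \<Longrightarrow> (\<lambda>\<omega>. real (delta k \<omega>)) \<in> borel_measurable N"
proof (induction k rule: less_induct)
  case (less k)
  show ?case
  proof (cases "k = 1")
    case True
    then have "(\<lambda>\<omega>. real (delta k \<omega>)) = (\<lambda>_. 1)" using delta1 by auto
    then show ?thesis by simp
  next
    case False
    obtain q j where k: "k = 2*q+j" "j < 2" "q \<ge> 1"
      using less False by (intro that[of "k div 2" "k mod 2"]) auto
    have IH: "(\<lambda>\<omega>. real (delta q \<omega>)) \<in> borel_measurable N" using less k by auto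
    have Z: "zeta q \<in> measurable N (count_space UNIV)" using less k assms by auto
    have F: "(\<lambda>\<omega>. real (fst (zeta q \<omega>))) \<in> borel_measurable N"
      by (rule measurable_compose[OF Z]) simp
    have S: "(\<lambda>\<omega>. real (snd (zeta q \<omega>))) \<in> borel_measurable N"
      by (rule measurable_compose[OF Z]) simp
    show ?thesis
    proof (cases "j = 0")
      case True
      then have "(\<lambda>\<omega>. real (delta k \<omega>)) = (\<lambda>\<omega>. real (delta q \<omega>) * real (fst (zeta q \<omega>)))"
        using k delta0 by auto
      then show ?thesis using IH F by simp
    next
      case False
      then have "j = 1" using k by auto
      then have "(\<lambda>\<omega>. real (delta k \<omega>)) = (\<lambda>\<omega>. real (delta q \<omega>) * real (snd (zeta q \<omega>)))"
        using k delta_1 by auto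
      then show ?thesis using IH S by simp
    qed
  qed
qed

lemma delta_ZH: "1 \<le> k \<Longrightarrow> (\<lambda>\<omega>. real (delta k \<omega>)) \<in> borel_measurable ZH"
  by (rule delta_meas_gen[of ZH k]) (auto simp: ZH_space zeta_ZH)

lemma delta_ZS: "1 \<le> k \<Longrightarrow> k \<le> m \<Longrightarrow> (\<lambda>\<omega>. real (delta k \<omega>)) \<in> borel_measurable (ZS {1..<m})"
  by (rule delta_meas_gen[of "ZS {1..<m}" m]) (auto simp: ZS_space zeta_ZS)

lemma delta_M: "1 \<le> k \<Longrightarrow> (\<lambda>\<omega>. real (delta k \<omega>)) \<in> borel_measurable M"
  using measurable_from_subalg[OF ZH_subalg delta_ZH] .

lemma delta_01: "1 \<le> k \<Longrightarrow> delta k \<omega> \<in> {0,1}"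
proof (induction k rule: less_induct)
  case (less k)
  show ?case
  proof (cases "k = 1")
    case True then show ?thesis using delta1 by auto
  next
    case False
    obtain q j where k: "k = 2*q+j" "j < 2" "q \<ge> 1"
      using less False by (intro that[of "k div 2" "k mod 2"]) auto
    have "delta q \<omega> \<in> {0,1}" using less k by auto
    moreover have "zeta q \<omega> \<in> {0,1}\<times>{0,1}" using zeta_val k by auto
    ultimately show ?thesis using k delta0[of q \<omega>] delta_1[of q \<omega>]
      by (cases "j = 0") (auto simp: less_2_cases_iff)
  qed
qed

lemma indep_set_integral:
  fixes U V :: "'a \<Rightarrow> real"
  assumes ind: "indep_set A B" and N1: "space N1 = space M" "sets N1 \<subseteq> A"
    and N2: "space N2 = space M" "sets N2 \<subseteq> B"
    and U: "U \<in> borel_measurable N1" and V: "V \<in> borel_measurable N2"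
    and iU: "integrable M U" and iV: "integrable M V"
  shows "(\<integral>\<omega>. U \<omega> * V \<omega> \<partial>M) = integral\<^sup>L M U * integral\<^sup>L M V"
proof -
  have iv: "indep_var borel U borel V"
    unfolding indep_var_def indep_vars_def
  proof (intro conjI ballI)
    fix i :: bool show "case_bool U V i \<in> M \<rightarrow>\<^sub>M case_bool borel borel i"
      using iU iV by (cases i) (simp_all add: borel_measurable_integrable)
  next
    have *: "sigma_sets (space M) {case_bool U V i -` S \<inter> space M |S. S \<in> sets (case_bool borel borel i)}
          \<subseteq> case_bool A B i" for i
    proof (cases i)
      case True
      have "U -` S \<inter> space M \<in> sets N1" if "S \<in> sets borel" for S
        using measurable_sets[OF U that] N1(1) by simp
      then have "{U -` S \<inter> space M |S. S \<in> sets borel} \<subseteq> sets N1" by blast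
      from sets.sigma_sets_subset[OF this] have "sigma_sets (space M) {U -` S \<inter> space M |S. S \<in> sets borel} \<subseteq> A"
        using N1 by simp
      then show ?thesis using True by simp
    next
      case False
      have "V -` S \<inter> space M \<in> sets N2" if "S \<in> sets borel" for S
        using measurable_sets[OF V that] N2(1) by simp
      then have "{V -` S \<inter> space M |S. S \<in> sets borel} \<subseteq> sets N2" by blast
      from sets.sigma_sets_subset[OF this] have "sigma_sets (space M) {V -` S \<inter> space M |S. S \<in> sets borel} \<subseteq> B"
        using N2 by simp
      then show ?thesis using False by simp
    qed
    show "indep_sets (\<lambda>i. sigma_sets (space M) {case_bool U V i -` A \<inter> space M |A. A \<in> sets (case_bool borel borel i)}) UNIV"
      using ind unfolding indep_set_def by (rule indep_sets_mono_sets) (rule *)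
  qed
  show ?thesis using indep_var_lebesgue_integral[OF iv iU iV] by simp
qed


lemma ZS_indep: assumes "m \<ge> 1" shows "indep_set (sets (ZS {1..<m})) (sets (ZS {m}))"
proof -
  have i0: "indep_sets (\<lambda>i. sigma_sets (space M) (Ez i)) {1..}"
    using zeta_indep unfolding indep_vars_def Ez_def by auto
  define I where "I = case_bool {1..<m} {m}"
  have i1: "indep_sets (\<lambda>i. sigma_sets (space M) (Ez i)) (\<Union> (I ` UNIV))"
    by (rule indep_sets_mono_index[OF _ i0]) (use assms in \<open>auto simp: I_def split: bool.splits\<close>)
  have st: "Int_stable (sigma_sets (space M) (Ez i))" for i
  proof -
    have "sigma_algebra (space M) (sigma_sets (space M) (Ez i))"
      by (rule sigma_algebra_sigma_sets) (auto simp: Ez_def)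
    then show ?thesis using algebra.Int_stable sigma_algebra_def by blast
  qed
  have dj: "disjoint_family_on I UNIV" unfolding disjoint_family_on_def I_def
    by (auto split: bool.splits)
  have "indep_sets (\<lambda>j. sigma_sets (space M) (\<Union> ((\<lambda>i. sigma_sets (space M) (Ez i)) ` I j))) UNIV"
    by (rule indep_sets_collect_sigma[OF i1 st dj])
  moreover have "(\<lambda>j. sigma_sets (space M) (\<Union> ((\<lambda>i. sigma_sets (space M) (Ez i)) ` I j)))
      = case_bool (sets (ZS {1..<m})) (sets (ZS {m}))"
    by (rule ext) (auto simp: I_def ZS_sets split: bool.splits)
  ultimately show ?thesis unfolding indep_set_def by simp
qed

lemma IND_int:
  fixes Phi :: "'a \<Rightarrow> real" and psi :: "nat \<times> nat \<Rightarrow> real"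
  assumes m: "m \<ge> 1" and Phi: "Phi \<in> borel_measurable (ZS {1..<m})" "integrable M Phi"
    and psi: "integrable M (\<lambda>\<omega>. psi (zeta m \<omega>))"
  shows "(\<integral>\<omega>. Phi \<omega> * psi (zeta m \<omega>) \<partial>M) = integral\<^sup>L M Phi * (\<integral>\<omega>. psi (zeta m \<omega>) \<partial>M)"
proof (rule indep_set_integral[OF ZS_indep[OF m] ZS_space order_refl ZS_space order_refl Phi(1) _ Phi(2) psi])
  show "(\<lambda>\<omega>. psi (zeta m \<omega>)) \<in> borel_measurable (ZS {m})"
    by (rule measurable_compose[OF zeta_ZS]) auto
qed

lemma HI_int:
  fixes U V :: "'a \<Rightarrow> real"
  assumes "U \<in> borel_measurable XS" "V \<in> borel_measurable ZH" "integrable M U" "integrable M V"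
  shows "(\<integral>\<omega>. U \<omega> * V \<omega> \<partial>M) = integral\<^sup>L M U * integral\<^sup>L M V"
proof -
  have "(\<integral>\<omega>. V \<omega> * U \<omega> \<partial>M) = integral\<^sup>L M V * integral\<^sup>L M U"
    by (rule indep_set_integral[OF HI[folded ZH_def XS_def] ZH_space order_refl XS_space order_refl assms(2,1,4,3)])
  then show ?thesis by (simp add: mult.commute)
qed


lemma zeta_set: "k \<ge> 1 \<Longrightarrow> {\<omega> \<in> space M. zeta k \<omega> = v} \<in> sets M"
  using measurable_sets[OF zeta_meas, of k "{v}"] by (simp add: vimage_def Int_def conj_commute)

lemma zeta_repr:
  fixes psi :: "nat \<times> nat \<Rightarrow> real"
  assumes "k \<ge> 1" "\<omega> \<in> space M"
  shows "psi (zeta k \<omega>) = (\<Sum>v\<in>{0,1}\<times>{0,1}. psi v * indicator {\<omega> \<in> space M. zeta k \<omega> = v} \<omega>)"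
proof -
  have "(\<Sum>v\<in>{0,1}\<times>{0,1}. psi v * indicator {\<omega> \<in> space M. zeta k \<omega> = v} \<omega>)
      = (\<Sum>v\<in>{0::nat,1}\<times>{0::nat,1}. if zeta k \<omega> = v then psi v else 0)"
    using assms by (intro sum.cong) (auto simp: indicator_def)
  also have "\<dots> = psi (zeta k \<omega>)"
    using zeta_val[OF assms(1), of \<omega>] by (subst sum.delta') auto
  finally show ?thesis by simp
qed

lemma zeta_int:
  fixes psi :: "nat \<times> nat \<Rightarrow> real"
  assumes k: "k \<ge> 1"
  shows "integrable M (\<lambda>\<omega>. psi (zeta k \<omega>))"
    "(\<integral>\<omega>. psi (zeta k \<omega>) \<partial>M) = (\<Sum>v\<in>{0,1}\<times>{0,1}. psi v * p (k mod 2) (fst v) (snd v))"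
proof -
  have i: "integrable M (\<lambda>\<omega>. \<Sum>v\<in>{0::nat,1}\<times>{0::nat,1}. psi v * indicator {\<omega> \<in> space M. zeta k \<omega> = v} \<omega>)"
    apply (rule Bochner_Integration.integrable_sum)
    apply (rule integrable_mult_right)
    apply (rule integrable_real_indicator)
    using zeta_set[OF k] by (auto simp: less_top[symmetric])
  show "integrable M (\<lambda>\<omega>. psi (zeta k \<omega>))"
    by (rule Bochner_Integration.integrable_cong[THEN iffD2, OF refl _ i]) (simp add: zeta_repr[OF k])
  have "(\<integral>\<omega>. psi (zeta k \<omega>) \<partial>M) = (\<integral>\<omega>. (\<Sum>v\<in>{0::nat,1}\<times>{0::nat,1}. psi v * indicator {\<omega> \<in> space M. zeta k \<omega> = v} \<omega>) \<partial>M)"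
    by (rule Bochner_Integration.integral_cong) (simp_all add: zeta_repr[OF k])
  also have "\<dots> = (\<Sum>v\<in>{0::nat,1}\<times>{0::nat,1}. psi v * measure M {\<omega> \<in> space M. zeta k \<omega> = v})"
    using zeta_set[OF k] by (subst Bochner_Integration.integral_sum) (auto simp: Int_absorb2 sets.sets_into_space less_top[symmetric])
  also have "\<dots> = (\<Sum>v\<in>{0,1}\<times>{0,1}. psi v * p (k mod 2) (fst v) (snd v))"
  proof (rule sum.cong[OF refl])
    fix v :: "nat \<times> nat" assume "v \<in> {0,1}\<times>{0,1}"
    then show "psi v * measure M {\<omega> \<in> space M. zeta k \<omega> = v} = psi v * p (k mod 2) (fst v) (snd v)"
      using zeta_law[OF k, of "fst v" "snd v"] by auto
  qed
  finally show "(\<integral>\<omega>. psi (zeta k \<omega>) \<partial>M) = (\<Sum>v\<in>{0,1}\<times>{0,1}. psi v * p (k mod 2) (fst v) (snd v))" .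
qed

definition comp :: "nat \<Rightarrow> nat \<times> nat \<Rightarrow> nat" where "comp j v = (if j = 0 then fst v else snd v)"

lemma comp_int: "k \<ge> 1 \<Longrightarrow> j < 2 \<Longrightarrow> (\<integral>\<omega>. real (comp j (zeta k \<omega>)) \<partial>M) = Pmat p (k mod 2) j"
  by (subst zeta_int(2)) (auto simp: comp_def Pmat_def less_2_cases_iff)

lemma prod_int: "k \<ge> 1 \<Longrightarrow> (\<integral>\<omega>. real (fst (zeta k \<omega>) * snd (zeta k \<omega>)) \<partial>M) = p (k mod 2) 1 1"
  using zeta_int(2)[of k "\<lambda>v. real (fst v * snd v)"] by simp

lemma delta_child: "q \<ge> 1 \<Longrightarrow> j < 2 \<Longrightarrow> delta (2*q+j) \<omega> = delta q \<omega> * comp j (zeta q \<omega>)"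
  using delta0[of q \<omega>] delta_1[of q \<omega>] by (auto simp: comp_def less_2_cases_iff)

lemma delta_int: "k \<ge> 1 \<Longrightarrow> integrable M (\<lambda>\<omega>. real (delta k \<omega>))"
proof -
  assume k: "k \<ge> 1"
  show ?thesis
    by (rule integrable_const_bound[where B=1]) (use delta_M[OF k] delta_01[OF k] in \<open>auto intro!: AE_I2 simp: le_Suc_eq\<close>)
qed

lemma delta_child_int:
  assumes q: "q \<ge> 1" and j: "j < 2"
  shows "(\<integral>\<omega>. real (delta (2*q+j) \<omega>) \<partial>M) = (\<integral>\<omega>. real (delta q \<omega>) \<partial>M) * Pmat p (q mod 2) j"
proof -
  have "(\<integral>\<omega>. real (delta (2*q+j) \<omega>) \<partial>M) = (\<integral>\<omega>. real (delta q \<omega>) * real (comp j (zeta q \<omega>)) \<partial>M)"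
    by (simp add: delta_child[OF q j])
  also have "\<dots> = (\<integral>\<omega>. real (delta q \<omega>) \<partial>M) * (\<integral>\<omega>. real (comp j (zeta q \<omega>)) \<partial>M)"
    by (rule IND_int[OF q delta_ZS[OF q order_refl] delta_int[OF q] zeta_int(1)[OF q]])
  finally show ?thesis using comp_int[OF q j] by simp
qed


lemma genG_finite[simp]: "finite (genG n)" unfolding genG_def by simp
lemma genG_0: "genG 0 = {1}" unfolding genG_def by auto

lemma genG_par: assumes j: "j < 2" shows "{k \<in> genG (Suc l). k mod 2 = j} = (\<lambda>q. 2*q+j) ` genG l"
proof (intro equalityI subsetI)
  fix k assume "k \<in> {k \<in> genG (Suc l). k mod 2 = j}"
  then have k: "2^Suc l \<le> k" "k < 2^Suc (Suc l)" "k mod 2 = j" unfolding genG_def by auto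
  have "k = 2*(k div 2) + j" using k(3) by (metis mult.commute div_mult_mod_eq)
  moreover have "k div 2 \<in> genG l" using k(1,2) unfolding genG_def by auto
  ultimately show "k \<in> (\<lambda>q. 2*q+j) ` genG l" by blast
next
  fix k assume "k \<in> (\<lambda>q. 2*q+j) ` genG l"
  then obtain q where "k = 2*q+j" "q \<in> genG l" by auto
  then show "k \<in> {k \<in> genG (Suc l). k mod 2 = j}" using j unfolding genG_def by auto
qed

lemma sum_genG_par: assumes j: "j < 2"
  shows "(\<Sum>k\<in>{k \<in> genG (Suc l). k mod 2 = j}. f k) = (\<Sum>q\<in>genG l. f (2*q+j))"
  unfolding genG_par[OF j] by (subst sum.reindex) (auto simp: inj_on_def)

lemma sum_par: fixes G :: "nat set" shows "finite G \<Longrightarrow> sum f G = sum f {q\<in>G. q mod 2 = 0} + sum f {q\<in>G. q mod 2 = 1}"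
proof -
  assume G: "finite G"
  have "G = {q\<in>G. q mod 2 = 0} \<union> {q\<in>G. q mod 2 = 1}" by auto
  then have "sum f G = sum f ({q\<in>G. q mod 2 = 0} \<union> {q\<in>G. q mod 2 = 1})" by simp
  also have "\<dots> = sum f {q\<in>G. q mod 2 = 0} + sum f {q\<in>G. q mod 2 = 1}"
    using G by (intro sum.union_disjoint) auto
  finally show ?thesis .
qed

lemma sum_genG_children: "(\<Sum>k\<in>genG (Suc l). f k) = (\<Sum>q\<in>genG l. f (2*q) + f (2*q+1))"
  using sum_par[of "genG (Suc l)" f] sum_genG_par[where j=0 and l=l and f=f] sum_genG_par[where j=1 and l=l and f=f]
  by (simp add: sum.distrib)

definition ed where "ed l i = (\<Sum>k\<in>{k \<in> genG l. k mod 2 = i}. \<integral>\<omega>. real (delta k \<omega>) \<partial>M)"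

lemma ed_nonneg: "ed l i \<ge> 0"
  unfolding ed_def by (intro sum_nonneg integral_nonneg_AE) auto

lemma ed_Suc: assumes j: "j < 2" shows "ed (Suc l) j = ed l 0 * Pmat p 0 j + ed l 1 * Pmat p 1 j"
proof -
  have "ed (Suc l) j = (\<Sum>q\<in>genG l. (\<integral>\<omega>. real (delta q \<omega>) \<partial>M) * Pmat p (q mod 2) j)"
    unfolding ed_def sum_genG_par[OF j]
    by (intro sum.cong refl delta_child_int[OF genG_ge1 j])
  also have "\<dots> = (\<Sum>q\<in>{q\<in>genG l. q mod 2 = 0}. (\<integral>\<omega>. real (delta q \<omega>) \<partial>M) * Pmat p (q mod 2) j)
      + (\<Sum>q\<in>{q\<in>genG l. q mod 2 = 1}. (\<integral>\<omega>. real (delta q \<omega>) \<partial>M) * Pmat p (q mod 2) j)"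
    by (rule sum_par) simp
  also have "\<dots> = (\<Sum>q\<in>{q\<in>genG l. q mod 2 = 0}. (\<integral>\<omega>. real (delta q \<omega>) \<partial>M) * Pmat p 0 j)
      + (\<Sum>q\<in>{q\<in>genG l. q mod 2 = 1}. (\<integral>\<omega>. real (delta q \<omega>) \<partial>M) * Pmat p 1 j)"
    by (intro arg_cong2[where f="(+)"] sum.cong) auto
  finally show ?thesis unfolding ed_def by (simp add: sum_distrib_right)
qed

lemma ed_0: "ed 0 0 = 0" "ed 0 1 = 1"
proof -
  have "{k \<in> {1::nat}. k mod 2 = 0} = {}" by auto
  then show "ed 0 0 = 0" by (simp only: ed_def genG_0 sum.empty)
  have "{k \<in> {1::nat}. k mod 2 = 1} = {1}" by auto
  moreover have "(\<integral>\<omega>. real (delta 1 \<omega>) \<partial>M) = 1" using delta1 by (simp add: prob_space)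
  ultimately show "ed 0 1 = 1" unfolding ed_def genG_0 by simp
qed

definition v0 where "v0 = Pmat p 0 1"
definition v1 where "v1 = pi - Pmat p 0 0"

lemma KI: "Pmat p 1 0 * Pmat p 0 1 = (pi - Pmat p 0 0) * (pi - Pmat p 1 1)"
proof -
  have e0: "z 1 * Pmat p 1 0 = z 0 * (pi - Pmat p 0 0)" using z_eig[of 0] by (simp add: algebra_simps)
  have e1: "z 0 * Pmat p 0 1 = z 1 * (pi - Pmat p 1 1)" using z_eig[of 1] by (simp add: algebra_simps)
  have "(z 0 * z 1) * (Pmat p 1 0 * Pmat p 0 1) = (z 1 * Pmat p 1 0) * (z 0 * Pmat p 0 1)" by simp
  also have "\<dots> = (z 0 * z 1) * ((pi - Pmat p 0 0) * (pi - Pmat p 1 1))" unfolding e0 e1 by simp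
  finally show ?thesis using z_pos by simp
qed

lemma v_pos: "v0 > 0" "v1 > 0"
proof -
  show "v0 > 0" unfolding v0_def using P_pos by auto
  have e0: "z 1 * Pmat p 1 0 = z 0 * (pi - Pmat p 0 0)" using z_eig[of 0] by (simp add: algebra_simps)
  have "z 1 * Pmat p 1 0 > 0" using z_pos P_pos[of 1 0] by simp
  then have "z 0 * (pi - Pmat p 0 0) > 0" using e0 by simp
  then show "v1 > 0" unfolding v1_def using z_pos by (simp add: zero_less_mult_iff)
qed

lemma V_eq: "ed l 0 * v0 + ed l 1 * v1 = pi ^ l * v1"
proof (induction l)
  case 0 then show ?case unfolding ed_0 by simp
next
  case (Suc l)
  have "ed (Suc l) 0 * v0 + ed (Suc l) 1 * v1
     = ed l 0 * (Pmat p 0 0 * v0 + Pmat p 0 1 * v1) + ed l 1 * (Pmat p 1 0 * v0 + Pmat p 1 1 * v1)"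
    by (simp add: ed_Suc algebra_simps)
  also have "Pmat p 0 0 * v0 + Pmat p 0 1 * v1 = pi * v0" unfolding v0_def v1_def by (simp add: algebra_simps)
  also have "Pmat p 1 0 * v0 + Pmat p 1 1 * v1 = pi * v1"
    unfolding v0_def v1_def using KI by (simp add: algebra_simps)
  also have "ed l 0 * (pi * v0) + ed l 1 * (pi * v1) = pi * (ed l 0 * v0 + ed l 1 * v1)"
    by (simp add: algebra_simps)
  also have "\<dots> = pi * (pi ^ l * v1)" using Suc by simp
  finally show ?case by simp
qed

definition Cd where "Cd = v1 / v0 + 1"

lemma Cd_pos: "Cd > 0" unfolding Cd_def using v_pos divide_pos_pos[of v1 v0] by linarith

lemma ed_bound: "ed l i \<le> Cd * pi ^ l" if "i < 2"
proof -
  have pl: "pi ^ l > 0" using pi_gt1 by simp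
  have V: "ed l 0 * v0 + ed l 1 * v1 = pi ^ l * v1" by (rule V_eq)
  have n0: "ed l 0 \<ge> 0" "ed l 1 \<ge> 0" by (rule ed_nonneg)+
  have m: "ed l 0 * v0 \<ge> 0" "ed l 1 * v1 \<ge> 0" using n0 v_pos by simp_all
  have "ed l 0 * v0 \<le> pi ^ l * v1" using V m by linarith
  then have a: "ed l 0 \<le> pi ^ l * (v1 / v0)" using v_pos by (simp add: field_simps)
  have "ed l 1 * v1 \<le> pi ^ l * v1" using V m by linarith
  then have b: "ed l 1 \<le> pi ^ l" using v_pos by simp
  have "pi ^ l * (v1 / v0) \<le> Cd * pi ^ l" "pi ^ l \<le> Cd * pi ^ l"
    unfolding Cd_def using pl v_pos by (simp_all add: algebra_simps)
  then show ?thesis using a b that by (auto simp: less_2_cases_iff)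
qed

lemma Ed_bound: "(\<Sum>k\<in>genG l. \<integral>\<omega>. real (delta k \<omega>) \<partial>M) \<le> 2 * Cd * pi ^ l"
proof -
  have "(\<Sum>k\<in>genG l. \<integral>\<omega>. real (delta k \<omega>) \<partial>M) = ed l 0 + ed l 1"
    unfolding ed_def using sum_par[of "genG l" "\<lambda>k. \<integral>\<omega>. real (delta k \<omega>) \<partial>M"] by simp
  then show ?thesis using ed_bound[of 0 l] ed_bound[of 1 l] by simp
qed


lemma h_meas: "k \<ge> 1 \<Longrightarrow> (\<lambda>\<omega>. (h :: nat \<times> nat \<Rightarrow> real) (zeta k \<omega>)) \<in> borel_measurable M"
  by (rule measurable_compose[OF zeta_meas]) auto

lemma D_L2:
  fixes h :: "nat \<Rightarrow> nat \<times> nat \<Rightarrow> real"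
  assumes S: "finite S" "S \<subseteq> {1..}"
    and hb: "\<And>k v. k \<in> S \<Longrightarrow> v \<in> {0,1}\<times>{0,1} \<Longrightarrow> \<bar>h k v\<bar> \<le> H"
    and h0: "\<And>k. k \<in> S \<Longrightarrow> (\<integral>\<omega>. h k (zeta k \<omega>) \<partial>M) = 0"
  shows "integrable M (\<lambda>\<omega>. (\<Sum>k\<in>S. real (delta k \<omega>) * h k (zeta k \<omega>))^2)"
    "(\<integral>\<omega>. (\<Sum>k\<in>S. real (delta k \<omega>) * h k (zeta k \<omega>))^2 \<partial>M)
          \<le> H^2 * (\<Sum>k\<in>S. \<integral>\<omega>. real (delta k \<omega>) \<partial>M)"
proof -
  define A where "A k \<omega> = real (delta k \<omega>) * h k (zeta k \<omega>)" for k \<omega>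
  have k1: "k \<ge> 1" if "k \<in> S" for k using S that by auto
  have Am: "A k \<in> borel_measurable M" if "k \<in> S" for k
    unfolding A_def by (rule borel_measurable_times[OF delta_M[OF k1[OF that]] h_meas[OF k1[OF that]]])
  have Ab: "\<bar>A k \<omega>\<bar> \<le> H" if "k \<in> S" for k \<omega>
  proof -
    have "\<bar>h k (zeta k \<omega>)\<bar> \<le> H" using hb[OF that zeta_val[OF k1[OF that]]] .
    moreover have "delta k \<omega> \<in> {0,1}" using delta_01[OF k1[OF that]] .
    moreover have "H \<ge> 0" using hb[OF that, of "(0,0)"] by simp
    ultimately show ?thesis unfolding A_def by auto
  qed
  have Aint: "integrable M (\<lambda>\<omega>. A k \<omega> * A m \<omega>)" if "k \<in> S" "m \<in> S" for k m
  proof (rule integrable_const_bound[where B="H*H"])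
    show "AE \<omega> in M. norm (A k \<omega> * A m \<omega>) \<le> H * H"
    proof (rule AE_I2)
      fix \<omega>
      have "\<bar>A k \<omega>\<bar> * \<bar>A m \<omega>\<bar> \<le> H * H"
        using Ab[OF that(1)] Ab[OF that(2)] order_trans[OF abs_ge_zero Ab[OF that(1)]] by (intro mult_mono) auto
      then show "norm (A k \<omega> * A m \<omega>) \<le> H * H" by (simp add: abs_mult)
    qed
    show "(\<lambda>\<omega>. A k \<omega> * A m \<omega>) \<in> borel_measurable M" using Am that by (intro borel_measurable_times) auto
  qed
  have cross: "(\<integral>\<omega>. A k \<omega> * A m \<omega> \<partial>M) = 0" if km: "k \<in> S" "m \<in> S" "k < m" for k m
  proof -
    have m1: "m \<ge> 1" using k1 km by auto
    define Phi where "Phi \<omega> = real (delta k \<omega>) * h k (zeta k \<omega>) * real (delta m \<omega>)" for \<omega>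
    have "Phi \<in> borel_measurable (ZS {1..<m})"
    proof -
      have "(\<lambda>\<omega>. h k (zeta k \<omega>)) \<in> borel_measurable (ZS {1..<m})"
        by (rule measurable_compose[OF zeta_ZS]) (use k1[OF km(1)] km in auto)
      then show ?thesis unfolding Phi_def
        using delta_ZS[OF k1[OF km(1)], of m] delta_ZS[OF m1 order_refl] km
        by (intro borel_measurable_times) auto
    qed
    moreover have "integrable M Phi"
    proof (rule integrable_const_bound[where B=H])
      show "AE \<omega> in M. norm (Phi \<omega>) \<le> H"
      proof (rule AE_I2)
        fix \<omega> have "delta m \<omega> \<in> {0,1}" using delta_01[OF m1] .
        then show "norm (Phi \<omega>) \<le> H" using Ab[OF km(1), of \<omega>] unfolding Phi_def A_def by auto
      qed
      show "Phi \<in> borel_measurable M" unfolding Phi_def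
        by (intro borel_measurable_times delta_M h_meas k1[OF km(1)] m1)
    qed
    ultimately have "(\<integral>\<omega>. Phi \<omega> * h m (zeta m \<omega>) \<partial>M) = integral\<^sup>L M Phi * (\<integral>\<omega>. h m (zeta m \<omega>) \<partial>M)"
      by (intro IND_int[OF m1] zeta_int(1)[OF m1])
    also have "\<dots> = 0" using h0[OF km(2)] by simp
    finally show ?thesis unfolding A_def Phi_def by (simp add: ac_simps)
  qed
  have sqeq: "(\<lambda>\<omega>. (\<Sum>k\<in>S. A k \<omega>)^2) = (\<lambda>\<omega>. \<Sum>k\<in>S. \<Sum>m\<in>S. A k \<omega> * A m \<omega>)"
    by (simp add: power2_eq_square sum_product)
  have "integrable M (\<lambda>\<omega>. (\<Sum>k\<in>S. A k \<omega>)^2)"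
    unfolding sqeq by (rule Bochner_Integration.integrable_sum, rule Bochner_Integration.integrable_sum, rule Aint)
  then show "integrable M (\<lambda>\<omega>. (\<Sum>k\<in>S. real (delta k \<omega>) * h k (zeta k \<omega>))^2)"
    unfolding A_def .
  have "(\<integral>\<omega>. (\<Sum>k\<in>S. A k \<omega>)^2 \<partial>M) = (\<integral>\<omega>. (\<Sum>k\<in>S. \<Sum>m\<in>S. A k \<omega> * A m \<omega>) \<partial>M)"
    unfolding sqeq ..
  also have "\<dots> = (\<Sum>k\<in>S. \<Sum>m\<in>S. \<integral>\<omega>. A k \<omega> * A m \<omega> \<partial>M)"
  proof -
    have "(\<integral>\<omega>. (\<Sum>k\<in>S. \<Sum>m\<in>S. A k \<omega> * A m \<omega>) \<partial>M) = (\<Sum>k\<in>S. \<integral>\<omega>. (\<Sum>m\<in>S. A k \<omega> * A m \<omega>) \<partial>M)"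
      by (rule Bochner_Integration.integral_sum, rule Bochner_Integration.integrable_sum, rule Aint)
    also have "\<dots> = (\<Sum>k\<in>S. \<Sum>m\<in>S. \<integral>\<omega>. A k \<omega> * A m \<omega> \<partial>M)"
      by (rule sum.cong[OF refl], rule Bochner_Integration.integral_sum, rule Aint)
    finally show ?thesis .
  qed
  also have "\<dots> = (\<Sum>k\<in>S. \<integral>\<omega>. A k \<omega> * A k \<omega> \<partial>M)"
  proof (rule sum.cong[OF refl])
    fix k assume k: "k \<in> S"
    have "(\<Sum>m\<in>S. \<integral>\<omega>. A k \<omega> * A m \<omega> \<partial>M) = (\<Sum>m\<in>S. if m = k then \<integral>\<omega>. A k \<omega> * A k \<omega> \<partial>M else 0)"
    proof (rule sum.cong[OF refl])
      fix m assume m: "m \<in> S"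
      show "(\<integral>\<omega>. A k \<omega> * A m \<omega> \<partial>M) = (if m = k then \<integral>\<omega>. A k \<omega> * A k \<omega> \<partial>M else 0)"
      proof (cases "m = k")
        case False
        then show ?thesis
        proof (cases "k < m")
          case True then show ?thesis using cross[OF k m] False by simp
        next
          case nlt: False
          then have "m < k" using False by simp
          then show ?thesis using cross[OF m k] False by (simp add: mult.commute)
        qed
      qed simp
    qed
    also have "\<dots> = (\<integral>\<omega>. A k \<omega> * A k \<omega> \<partial>M)" using k S by simp
    finally show "(\<Sum>m\<in>S. \<integral>\<omega>. A k \<omega> * A m \<omega> \<partial>M) = (\<integral>\<omega>. A k \<omega> * A k \<omega> \<partial>M)" .
  qed
  also have "\<dots> \<le> (\<Sum>k\<in>S. \<integral>\<omega>. H^2 * real (delta k \<omega>) \<partial>M)"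
  proof (rule sum_mono)
    fix k assume k: "k \<in> S"
    show "(\<integral>\<omega>. A k \<omega> * A k \<omega> \<partial>M) \<le> (\<integral>\<omega>. H^2 * real (delta k \<omega>) \<partial>M)"
    proof (rule integral_mono)
      show "integrable M (\<lambda>\<omega>. A k \<omega> * A k \<omega>)" by (rule Aint[OF k k])
      show "integrable M (\<lambda>\<omega>. H^2 * real (delta k \<omega>))" using delta_int[OF k1[OF k]] by simp
      fix \<omega>
      have d: "delta k \<omega> \<in> {0,1}" using delta_01[OF k1[OF k]] .
      have "\<bar>h k (zeta k \<omega>)\<bar> \<le> H" using hb[OF k zeta_val[OF k1[OF k]]] .
      then have "\<bar>h k (zeta k \<omega>)\<bar> * \<bar>h k (zeta k \<omega>)\<bar> \<le> H * H"
        by (intro mult_mono) auto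
      then have "h k (zeta k \<omega>) * h k (zeta k \<omega>) \<le> H^2"
        by (simp add: abs_mult_self_eq power2_eq_square)
      then show "A k \<omega> * A k \<omega> \<le> H^2 * real (delta k \<omega>)" using d unfolding A_def by auto
    qed
  qed
  also have "\<dots> = H^2 * (\<Sum>k\<in>S. \<integral>\<omega>. real (delta k \<omega>) \<partial>M)"
    by (simp add: sum_distrib_left)
  finally show "(\<integral>\<omega>. (\<Sum>k\<in>S. real (delta k \<omega>) * h k (zeta k \<omega>))^2 \<partial>M)
          \<le> H^2 * (\<Sum>k\<in>S. \<integral>\<omega>. real (delta k \<omega>) \<partial>M)" unfolding A_def .
qed

end



lemma DENS:
  fixes Y :: "'a \<Rightarrow> 'b" and r1 r2 :: "'a \<Rightarrow> real" and g :: "'b \<Rightarrow> real"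
  assumes Y: "Y \<in> measurable M N"
    and r1: "r1 \<in> borel_measurable M" "AE x in M. 0 \<le> r1 x" "integrable M r1"
    and r2: "r2 \<in> borel_measurable M" "AE x in M. 0 \<le> r2 x" "integrable M r2"
    and eq: "\<And>B. B \<in> sets N \<Longrightarrow> (\<integral>x. r1 x * indicator B (Y x) \<partial>M) = (\<integral>x. r2 x * indicator B (Y x) \<partial>M)"
    and g: "g \<in> borel_measurable N"
  shows "(\<integral>x. r1 x * g (Y x) \<partial>M) = (\<integral>x. r2 x * g (Y x) \<partial>M)"
proof -
  define mu where "mu r = distr (density M (\<lambda>x. ennreal (r x))) N Y" for r
  have em: "emeasure (mu r) B = ennreal (\<integral>x. r x * indicator B (Y x) \<partial>M)"
    if r: "r \<in> borel_measurable M" "AE x in M. 0 \<le> r x" "integrable M r" and B: "B \<in> sets N" for r B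
  proof -
    have YB: "Y -` B \<inter> space M \<in> sets M" using measurable_sets[OF Y B] .
    have "emeasure (mu r) B = emeasure (density M (\<lambda>x. ennreal (r x))) (Y -` B \<inter> space M)"
      unfolding mu_def by (subst emeasure_distr) (use Y B in auto)
    also have "\<dots> = (\<integral>\<^sup>+ x. ennreal (r x) * indicator (Y -` B \<inter> space M) x \<partial>M)"
      by (rule emeasure_density) (use r YB in auto)
    also have "\<dots> = (\<integral>\<^sup>+ x. ennreal (r x * indicator B (Y x)) \<partial>M)"
      by (rule nn_integral_cong) (auto simp: indicator_def)
    also have "\<dots> = ennreal (\<integral>x. r x * indicator B (Y x) \<partial>M)"
    proof (rule nn_integral_eq_integral)
      show "integrable M (\<lambda>x. r x * indicator B (Y x))"
      proof (rule Bochner_Integration.integrable_bound[OF r(3)])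
        show "(\<lambda>x. r x * indicator B (Y x)) \<in> borel_measurable M"
          using r(1) measurable_compose[OF Y borel_measurable_indicator[OF B]] by (rule borel_measurable_times)
        show "AE x in M. norm (r x * indicator B (Y x)) \<le> norm (r x)"
          by (rule AE_I2) (auto simp: indicator_def)
      qed
      show "AE x in M. 0 \<le> r x * indicator B (Y x)" using r(2) by eventually_elim (auto simp: indicator_def)
    qed
    finally show ?thesis .
  qed
  have "mu r1 = mu r2"
  proof (rule measure_eqI)
    show "sets (mu r1) = sets (mu r2)" unfolding mu_def by simp
    fix B assume "B \<in> sets (mu r1)"
    then have B: "B \<in> sets N" unfolding mu_def by simp
    show "emeasure (mu r1) B = emeasure (mu r2) B"
      using em[OF r1 B] em[OF r2 B] eq[OF B] by simp
  qed
  have int: "integral\<^sup>L (mu r) g = (\<integral>x. r x * g (Y x) \<partial>M)"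
    if r: "r \<in> borel_measurable M" "AE x in M. 0 \<le> r x" for r
  proof -
    have "integral\<^sup>L (mu r) g = integral\<^sup>L (density M (\<lambda>x. ennreal (r x))) (\<lambda>x. g (Y x))"
      unfolding mu_def by (rule integral_distr) (use Y g in auto)
    also have "\<dots> = (\<integral>x. r x *\<^sub>R g (Y x) \<partial>M)"
      by (rule integral_density) (use r measurable_compose[OF Y g] in auto)
    finally show ?thesis by simp
  qed
  show ?thesis using int[OF r1(1,2)] int[OF r2(1,2)] \<open>mu r1 = mu r2\<close> by simp
qed


context bar begin

definition Y where "Y q \<omega> = (eps (2*q) \<omega>, eps (2*q+1) \<omega>)"

lemma Y_meas: "q \<ge> 1 \<Longrightarrow> Y q \<in> borel_measurable M"
  unfolding Y_def by (rule borel_measurable_Pair) (rule eps_meas; simp)+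

lemma Y_XS: "q \<ge> 1 \<Longrightarrow> Y q \<in> borel_measurable XS"
  unfolding Y_def by (rule borel_measurable_Pair) (rule eps_XS; simp)+

lemma ind_int: assumes "B \<in> sets borel" "q \<ge> 1" shows "integrable M (\<lambda>\<omega>. indicator B (Y q \<omega>) :: real)"
proof (rule integrable_const_bound[where B=1])
  show "AE \<omega> in M. norm (indicator B (Y q \<omega>) :: real) \<le> 1" by (auto intro!: AE_I2 simp: indicator_def)
  show "(\<lambda>\<omega>. indicator B (Y q \<omega>) :: real) \<in> borel_measurable M"
    by (rule measurable_compose[OF Y_meas[OF assms(2)] borel_measurable_indicator[OF assms(1)]])
qed

lemma KEY:
  fixes f g :: "real \<times> real \<Rightarrow> real"
  assumes q: "q \<in> genG n" "q' \<in> genG n" "q \<noteq> q'"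
    and f: "f \<in> borel_measurable borel" "integrable M (\<lambda>\<omega>. f (Y q \<omega>))"
      "AE \<omega> in M. real_cond_exp M (natF M X n) (\<lambda>\<omega>. f (Y q \<omega>)) \<omega> = 0"
    and g: "g \<in> borel_measurable borel" "integrable M (\<lambda>\<omega>. f (Y q \<omega>) * g (Y q' \<omega>))"
  shows "(\<integral>\<omega>. f (Y q \<omega>) * g (Y q' \<omega>) \<partial>M) = 0"
proof -
  interpret S: sigma_finite_subalgebra M "natF M X n" by (rule natF_sfs)
  let ?F = "natF M X n"
  have q1: "q \<ge> 1" "q' \<ge> 1" using q genG_ge1 by auto
  have Yq: "Y q \<in> borel_measurable M" "Y q' \<in> borel_measurable M" using Y_meas q1 by auto
  have fY: "(\<lambda>\<omega>. f (Y q \<omega>)) \<in> borel_measurable M" by (rule measurable_compose[OF Yq(1) f(1)])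
  have gY: "(\<lambda>\<omega>. g (Y q' \<omega>)) \<in> borel_measurable M" by (rule measurable_compose[OF Yq(2) g(1)])
  have step1: "(\<integral>\<omega>. f (Y q \<omega>) * indicator B' (Y q' \<omega>) \<partial>M) = 0" if B': "B' \<in> sets borel" for B'
  proof -
    define Wc where "Wc = real_cond_exp M ?F (\<lambda>\<omega>. indicator B' (Y q' \<omega>))"
    have iB': "integrable M (\<lambda>\<omega>. indicator B' (Y q' \<omega>) :: real)" by (rule ind_int[OF B' q1(2)])
    have Wc_ge: "AE \<omega> in M. 0 \<le> Wc \<omega>" unfolding Wc_def
      by (rule S.real_cond_exp_ge_c[OF iB']) (auto simp: indicator_def)
    have Wc_le: "AE \<omega> in M. Wc \<omega> \<le> 1" unfolding Wc_def
      by (rule S.real_cond_exp_le_c[OF iB']) (auto simp: indicator_def)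
    have WcF: "Wc \<in> borel_measurable ?F" unfolding Wc_def by simp
    have WcM: "Wc \<in> borel_measurable M" unfolding Wc_def by simp
    have Wc_int: "integrable M Wc" unfolding Wc_def by (rule S.real_cond_exp_int(1)[OF iB'])
    have Wbound: "integrable M (\<lambda>\<omega>. Wc \<omega> * h \<omega>)" if h: "integrable M h" for h :: "'a \<Rightarrow> real"
    proof (rule Bochner_Integration.integrable_bound[OF h])
      show "(\<lambda>\<omega>. Wc \<omega> * h \<omega>) \<in> borel_measurable M" using WcM borel_measurable_integrable[OF h]
        by (rule borel_measurable_times)
      show "AE \<omega> in M. norm (Wc \<omega> * h \<omega>) \<le> norm (h \<omega>)"
        using Wc_ge Wc_le
      proof eventually_elim
        case (elim \<omega>)
        then have "\<bar>Wc \<omega>\<bar> * \<bar>h \<omega>\<bar> \<le> 1 * \<bar>h \<omega>\<bar>" by (intro mult_right_mono) auto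
        then show ?case by (simp add: abs_mult)
      qed
    qed
    have eq: "(\<integral>\<omega>. indicator B' (Y q' \<omega>) * indicator B (Y q \<omega>) \<partial>M) = (\<integral>\<omega>. Wc \<omega> * indicator B (Y q \<omega>) \<partial>M)"
      if B: "B \<in> sets borel" for B
    proof -
      have iB: "integrable M (\<lambda>\<omega>. indicator B (Y q \<omega>) :: real)" by (rule ind_int[OF B q1(1)])
      have iBB: "integrable M (\<lambda>\<omega>. indicator B (Y q \<omega>) * indicator B' (Y q' \<omega>) :: real)"
      proof (rule integrable_const_bound[where B=1])
        show "AE \<omega> in M. norm (indicator B (Y q \<omega>) * indicator B' (Y q' \<omega>) :: real) \<le> 1"
          by (auto intro!: AE_I2 simp: indicator_def)
        show "(\<lambda>\<omega>. indicator B (Y q \<omega>) * indicator B' (Y q' \<omega>) :: real) \<in> borel_measurable M"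
          by (rule borel_measurable_times[OF measurable_compose[OF Yq(1) borel_measurable_indicator[OF B]]
                  measurable_compose[OF Yq(2) borel_measurable_indicator[OF B']]])
      qed
      have ci: "AE \<omega> in M. real_cond_exp M ?F (\<lambda>x. \<Prod>j\<in>{q,q'}. indicator ((\<lambda>j. if j = q then B else B') j) (Y j x)) \<omega>
                    = (\<Prod>j\<in>{q,q'}. real_cond_exp M ?F (\<lambda>x. indicator ((\<lambda>j. if j = q then B else B') j) (Y j x)) \<omega>)"
      proof -
        have H: "\<And>J BB. J \<subseteq> genG n \<Longrightarrow> finite J \<Longrightarrow> (\<forall>j\<in>J. BB j \<in> sets borel) \<Longrightarrow>
          (AE \<omega> in M. real_cond_exp M ?F (\<lambda>x. \<Prod>j\<in>J. indicator (BB j) (Y j x)) \<omega>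
                    = (\<Prod>j\<in>J. real_cond_exp M ?F (\<lambda>x. indicator (BB j) (Y j x)) \<omega>))"
          using HN2[of n] unfolding cond_indep_given_def Y_def by blast
        show ?thesis by (rule H) (use q B B' in auto)
      qed
      have ci2: "AE \<omega> in M. real_cond_exp M ?F (\<lambda>x. indicator B (Y q x) * indicator B' (Y q' x)) \<omega>
                    = real_cond_exp M ?F (\<lambda>x. indicator B (Y q x)) \<omega> * Wc \<omega>"
        using ci q(3) unfolding Wc_def by simp
      have "(\<integral>\<omega>. indicator B' (Y q' \<omega>) * indicator B (Y q \<omega>) \<partial>M)
          = (\<integral>\<omega>. real_cond_exp M ?F (\<lambda>x. indicator B (Y q x) * indicator B' (Y q' x)) \<omega> \<partial>M)"
        using S.real_cond_exp_int(2)[OF iBB] by (simp add: mult.commute)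
      also have "\<dots> = (\<integral>\<omega>. Wc \<omega> * real_cond_exp M ?F (\<lambda>x. indicator B (Y q x)) \<omega> \<partial>M)"
        by (rule integral_cong_AE) (use ci2 WcM in \<open>auto simp: mult.commute\<close>)
      also have "\<dots> = (\<integral>\<omega>. Wc \<omega> * indicator B (Y q \<omega>) \<partial>M)"
        by (rule S.real_cond_exp_intg(2)[OF Wbound[OF iB] WcF])
           (rule measurable_compose[OF Yq(1) borel_measurable_indicator[OF B]])
      finally show ?thesis .
    qed
    have "(\<integral>\<omega>. indicator B' (Y q' \<omega>) * f (Y q \<omega>) \<partial>M) = (\<integral>\<omega>. Wc \<omega> * f (Y q \<omega>) \<partial>M)"
    proof (rule DENS[OF Yq(1) _ _ iB' WcM Wc_ge Wc_int eq f(1)])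
      show "(\<lambda>\<omega>. indicator B' (Y q' \<omega>) :: real) \<in> borel_measurable M"
        by (rule measurable_compose[OF Yq(2) borel_measurable_indicator[OF B']])
      show "AE \<omega> in M. 0 \<le> (indicator B' (Y q' \<omega>) :: real)" by simp
    qed
    also have "\<dots> = (\<integral>\<omega>. Wc \<omega> * real_cond_exp M ?F (\<lambda>\<omega>. f (Y q \<omega>)) \<omega> \<partial>M)"
      by (rule S.real_cond_exp_intg(2)[OF Wbound[OF f(2)] WcF fY, symmetric])
    also have "\<dots> = 0"
    proof -
      have "(\<integral>\<omega>. Wc \<omega> * real_cond_exp M ?F (\<lambda>\<omega>. f (Y q \<omega>)) \<omega> \<partial>M) = (\<integral>\<omega>. 0 \<partial>M)"
        by (rule integral_cong_AE) (use f(3) WcM in auto)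
      then show ?thesis by simp
    qed
    finally show ?thesis by (simp add: mult.commute)
  qed
  define fp where "fp \<omega> = max 0 (f (Y q \<omega>))" for \<omega>
  define fm where "fm \<omega> = max 0 (- f (Y q \<omega>))" for \<omega>
  have fpm: "f (Y q \<omega>) = fp \<omega> - fm \<omega>" for \<omega> unfolding fp_def fm_def by auto
  have fpM: "fp \<in> borel_measurable M" "fm \<in> borel_measurable M" unfolding fp_def fm_def using fY by auto
  have fp_int: "integrable M fp" "integrable M fm" unfolding fp_def fm_def using f(2) by auto
  have bnd: "integrable M (\<lambda>\<omega>. h \<omega> * k \<omega>)"
    if h: "h \<in> borel_measurable M" "\<And>\<omega>. \<bar>h \<omega>\<bar> \<le> \<bar>f (Y q \<omega>)\<bar>" and k: "k \<in> borel_measurable M"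
       and I: "integrable M (\<lambda>\<omega>. f (Y q \<omega>) * k \<omega>)" for h k :: "'a \<Rightarrow> real"
  proof (rule Bochner_Integration.integrable_bound[OF I])
    show "(\<lambda>\<omega>. h \<omega> * k \<omega>) \<in> borel_measurable M" using h(1) k by (rule borel_measurable_times)
    show "AE \<omega> in M. norm (h \<omega> * k \<omega>) \<le> norm (f (Y q \<omega>) * k \<omega>)"
      by (rule AE_I2) (simp add: abs_mult mult_right_mono h(2))
  qed
  have fp_b: "\<bar>fp \<omega>\<bar> \<le> \<bar>f (Y q \<omega>)\<bar>" "\<bar>fm \<omega>\<bar> \<le> \<bar>f (Y q \<omega>)\<bar>" for \<omega> unfolding fp_def fm_def by auto
  have indM: "(\<lambda>\<omega>. indicator B (Y q' \<omega>) :: real) \<in> borel_measurable M" if "B \<in> sets borel" for B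
    by (rule measurable_compose[OF Yq(2) borel_measurable_indicator[OF that]])
  have fIint: "integrable M (\<lambda>\<omega>. f (Y q \<omega>) * indicator B (Y q' \<omega>))" if B: "B \<in> sets borel" for B
  proof (rule Bochner_Integration.integrable_bound[OF f(2)])
    show "(\<lambda>\<omega>. f (Y q \<omega>) * indicator B (Y q' \<omega>)) \<in> borel_measurable M"
      using fY indM[OF B] by (rule borel_measurable_times)
    show "AE \<omega> in M. norm (f (Y q \<omega>) * indicator B (Y q' \<omega>)) \<le> norm (f (Y q \<omega>))"
      by (rule AE_I2) (simp add: indicator_def)
  qed
  have eq2: "(\<integral>\<omega>. fp \<omega> * indicator B (Y q' \<omega>) \<partial>M) = (\<integral>\<omega>. fm \<omega> * indicator B (Y q' \<omega>) \<partial>M)"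
    if B: "B \<in> sets borel" for B
  proof -
    have i1: "integrable M (\<lambda>\<omega>. fp \<omega> * indicator B (Y q' \<omega>))"
      by (rule bnd[OF fpM(1) fp_b(1) indM[OF B] fIint[OF B]])
    have i2: "integrable M (\<lambda>\<omega>. fm \<omega> * indicator B (Y q' \<omega>))"
      by (rule bnd[OF fpM(2) fp_b(2) indM[OF B] fIint[OF B]])
    have "0 = (\<integral>\<omega>. f (Y q \<omega>) * indicator B (Y q' \<omega>) \<partial>M)" using step1[OF B] by simp
    also have "\<dots> = (\<integral>\<omega>. fp \<omega> * indicator B (Y q' \<omega>) - fm \<omega> * indicator B (Y q' \<omega>) \<partial>M)"
      by (simp add: fpm left_diff_distrib)
    also have "\<dots> = (\<integral>\<omega>. fp \<omega> * indicator B (Y q' \<omega>) \<partial>M) - (\<integral>\<omega>. fm \<omega> * indicator B (Y q' \<omega>) \<partial>M)"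
      by (rule Bochner_Integration.integral_diff[OF i1 i2])
    finally show ?thesis by simp
  qed
  have "(\<integral>\<omega>. fp \<omega> * g (Y q' \<omega>) \<partial>M) = (\<integral>\<omega>. fm \<omega> * g (Y q' \<omega>) \<partial>M)"
    by (rule DENS[OF Yq(2) fpM(1) _ fp_int(1) fpM(2) _ fp_int(2) eq2 g(1)])
       (auto simp: fp_def fm_def)
  moreover have "integrable M (\<lambda>\<omega>. fp \<omega> * g (Y q' \<omega>))" by (rule bnd[OF fpM(1) fp_b(1) gY g(2)])
  moreover have "integrable M (\<lambda>\<omega>. fm \<omega> * g (Y q' \<omega>))" by (rule bnd[OF fpM(2) fp_b(2) gY g(2)])
  ultimately show ?thesis
    by (simp add: fpm left_diff_distrib Bochner_Integration.integral_diff)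
qed


lemma sq_prod_int:
  fixes h k :: "'a \<Rightarrow> real"
  assumes "h \<in> borel_measurable M" "k \<in> borel_measurable M"
    "integrable M (\<lambda>\<omega>. (h \<omega>)^2)" "integrable M (\<lambda>\<omega>. (k \<omega>)^2)"
  shows "integrable M (\<lambda>\<omega>. h \<omega> * k \<omega>)"
proof (rule Bochner_Integration.integrable_bound[OF Bochner_Integration.integrable_add[OF assms(3,4)]])
  show "(\<lambda>\<omega>. h \<omega> * k \<omega>) \<in> borel_measurable M" using assms(1,2) by (rule borel_measurable_times)
  show "AE \<omega> in M. norm (h \<omega> * k \<omega>) \<le> norm ((h \<omega>)^2 + (k \<omega>)^2)"
  proof (rule AE_I2)
    fix \<omega>
    have "2 * \<bar>h \<omega>\<bar> * \<bar>k \<omega>\<bar> \<le> (h \<omega>)^2 + (k \<omega>)^2"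
      using sum_squares_bound[of "\<bar>h \<omega>\<bar>" "\<bar>k \<omega>\<bar>"] by (simp add: power2_abs)
    moreover have "\<bar>h \<omega>\<bar> * \<bar>k \<omega>\<bar> \<ge> 0" by simp
    ultimately have "\<bar>h \<omega>\<bar> * \<bar>k \<omega>\<bar> \<le> (h \<omega>)^2 + (k \<omega>)^2" by linarith
    then show "norm (h \<omega> * k \<omega>) \<le> norm ((h \<omega>)^2 + (k \<omega>)^2)" by (simp add: abs_mult)
  qed
qed

lemma sq_int:
  fixes h :: "'a \<Rightarrow> real"
  assumes "h \<in> borel_measurable M" "integrable M (\<lambda>\<omega>. (h \<omega>)^2)"
  shows "integrable M h"
  using sq_prod_int[OF assms(1) borel_measurable_const assms(2), of 1] by simp

lemma U_L2:
  fixes f :: "real \<times> real \<Rightarrow> real" and cc :: "nat \<Rightarrow> 'a \<Rightarrow> real"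
  assumes f: "f \<in> borel_measurable borel"
    and f2: "\<And>q. q \<in> genG n \<Longrightarrow> integrable M (\<lambda>\<omega>. (f (Y q \<omega>))^2)"
    and fce: "\<And>q. q \<in> genG n \<Longrightarrow> AE \<omega> in M. real_cond_exp M (natF M X n) (\<lambda>\<omega>. f (Y q \<omega>)) \<omega> = 0"
    and fK: "\<And>q. q \<in> genG n \<Longrightarrow> (\<integral>\<omega>. (f (Y q \<omega>))^2 \<partial>M) \<le> K"
    and cc: "\<And>q. q \<in> genG n \<Longrightarrow> cc q \<in> borel_measurable ZH"
    and c01: "\<And>q \<omega>. q \<in> genG n \<Longrightarrow> cc q \<omega> \<in> {0,1}"
  shows "integrable M (\<lambda>\<omega>. (\<Sum>q\<in>genG n. f (Y q \<omega>) * cc q \<omega>)^2)"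
    "(\<integral>\<omega>. (\<Sum>q\<in>genG n. f (Y q \<omega>) * cc q \<omega>)^2 \<partial>M) \<le> K * (\<Sum>q\<in>genG n. integral\<^sup>L M (cc q))"
proof -
  let ?G = "genG n"
  have q1: "q \<ge> 1" if "q \<in> ?G" for q using genG_ge1 that by auto
  have fYX: "(\<lambda>\<omega>. f (Y q \<omega>)) \<in> borel_measurable XS" if "q \<in> ?G" for q
    by (rule measurable_compose[OF Y_XS[OF q1[OF that]] f])
  have fY: "(\<lambda>\<omega>. f (Y q \<omega>)) \<in> borel_measurable M" if "q \<in> ?G" for q
    by (rule measurable_compose[OF Y_meas[OF q1[OF that]] f])
  have cM: "cc q \<in> borel_measurable M" if "q \<in> ?G" for q
    by (rule measurable_from_subalg[OF ZH_subalg cc[OF that]])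
  have cint: "integrable M (\<lambda>\<omega>. cc q \<omega> * cc q' \<omega>)" if "q \<in> ?G" "q' \<in> ?G" for q q'
  proof (rule integrable_const_bound[where B=1])
    show "AE \<omega> in M. norm (cc q \<omega> * cc q' \<omega>) \<le> 1"
    proof (rule AE_I2)
      fix \<omega> show "norm (cc q \<omega> * cc q' \<omega>) \<le> 1" using c01[OF that(1), of \<omega>] c01[OF that(2), of \<omega>] by auto
    qed
    show "(\<lambda>\<omega>. cc q \<omega> * cc q' \<omega>) \<in> borel_measurable M" using cM[OF that(1)] cM[OF that(2)] by (rule borel_measurable_times)
  qed
  have ffint: "integrable M (\<lambda>\<omega>. f (Y q \<omega>) * f (Y q' \<omega>))" if "q \<in> ?G" "q' \<in> ?G" for q q'
    by (rule sq_prod_int[OF fY[OF that(1)] fY[OF that(2)] f2[OF that(1)] f2[OF that(2)]])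
  have trm: "(\<integral>\<omega>. f (Y q \<omega>) * cc q \<omega> * (f (Y q' \<omega>) * cc q' \<omega>) \<partial>M)
      = (\<integral>\<omega>. f (Y q \<omega>) * f (Y q' \<omega>) \<partial>M) * (\<integral>\<omega>. cc q \<omega> * cc q' \<omega> \<partial>M)" if "q \<in> ?G" "q' \<in> ?G" for q q'
  proof -
    have "(\<integral>\<omega>. f (Y q \<omega>) * cc q \<omega> * (f (Y q' \<omega>) * cc q' \<omega>) \<partial>M)
        = (\<integral>\<omega>. (f (Y q \<omega>) * f (Y q' \<omega>)) * (cc q \<omega> * cc q' \<omega>) \<partial>M)" by (simp add: ac_simps)
    also have "\<dots> = (\<integral>\<omega>. f (Y q \<omega>) * f (Y q' \<omega>) \<partial>M) * (\<integral>\<omega>. cc q \<omega> * cc q' \<omega> \<partial>M)"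
    proof (rule HI_int)
      show "(\<lambda>\<omega>. f (Y q \<omega>) * f (Y q' \<omega>)) \<in> borel_measurable XS"
        using fYX[OF that(1)] fYX[OF that(2)] by (rule borel_measurable_times)
      show "(\<lambda>\<omega>. cc q \<omega> * cc q' \<omega>) \<in> borel_measurable ZH"
        using cc[OF that(1)] cc[OF that(2)] by (rule borel_measurable_times)
    qed (rule ffint[OF that], rule cint[OF that])
    finally show ?thesis .
  qed
  have tint: "integrable M (\<lambda>\<omega>. f (Y q \<omega>) * cc q \<omega> * (f (Y q' \<omega>) * cc q' \<omega>))" if "q \<in> ?G" "q' \<in> ?G" for q q'
  proof (rule Bochner_Integration.integrable_bound[OF ffint[OF that]])
    show "(\<lambda>\<omega>. f (Y q \<omega>) * cc q \<omega> * (f (Y q' \<omega>) * cc q' \<omega>)) \<in> borel_measurable M"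
      using fY[OF that(1)] cM[OF that(1)] fY[OF that(2)] cM[OF that(2)]
      by (intro borel_measurable_times)
    show "AE \<omega> in M. norm (f (Y q \<omega>) * cc q \<omega> * (f (Y q' \<omega>) * cc q' \<omega>)) \<le> norm (f (Y q \<omega>) * f (Y q' \<omega>))"
    proof (rule AE_I2)
      fix \<omega>
      show "norm (f (Y q \<omega>) * cc q \<omega> * (f (Y q' \<omega>) * cc q' \<omega>)) \<le> norm (f (Y q \<omega>) * f (Y q' \<omega>))"
        using c01[OF that(1), of \<omega>] c01[OF that(2), of \<omega>] by (auto simp: abs_mult)
    qed
  qed
  have sqeq: "(\<lambda>\<omega>. (\<Sum>q\<in>?G. f (Y q \<omega>) * cc q \<omega>)^2)
      = (\<lambda>\<omega>. \<Sum>q\<in>?G. \<Sum>q'\<in>?G. f (Y q \<omega>) * cc q \<omega> * (f (Y q' \<omega>) * cc q' \<omega>))"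
    by (simp add: power2_eq_square sum_product)
  show "integrable M (\<lambda>\<omega>. (\<Sum>q\<in>genG n. f (Y q \<omega>) * cc q \<omega>)^2)"
    unfolding sqeq by (rule Bochner_Integration.integrable_sum, rule Bochner_Integration.integrable_sum, rule tint)
  have "(\<integral>\<omega>. (\<Sum>q\<in>?G. f (Y q \<omega>) * cc q \<omega>)^2 \<partial>M)
      = (\<integral>\<omega>. (\<Sum>q\<in>?G. \<Sum>q'\<in>?G. f (Y q \<omega>) * cc q \<omega> * (f (Y q' \<omega>) * cc q' \<omega>)) \<partial>M)"
    unfolding sqeq ..
  also have "\<dots> = (\<Sum>q\<in>?G. \<Sum>q'\<in>?G. \<integral>\<omega>. f (Y q \<omega>) * cc q \<omega> * (f (Y q' \<omega>) * cc q' \<omega>) \<partial>M)"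
  proof -
    have "(\<integral>\<omega>. (\<Sum>q\<in>?G. \<Sum>q'\<in>?G. f (Y q \<omega>) * cc q \<omega> * (f (Y q' \<omega>) * cc q' \<omega>)) \<partial>M)
        = (\<Sum>q\<in>?G. \<integral>\<omega>. (\<Sum>q'\<in>?G. f (Y q \<omega>) * cc q \<omega> * (f (Y q' \<omega>) * cc q' \<omega>)) \<partial>M)"
      by (rule Bochner_Integration.integral_sum, rule Bochner_Integration.integrable_sum, rule tint)
    also have "\<dots> = (\<Sum>q\<in>?G. \<Sum>q'\<in>?G. \<integral>\<omega>. f (Y q \<omega>) * cc q \<omega> * (f (Y q' \<omega>) * cc q' \<omega>) \<partial>M)"
      by (rule sum.cong[OF refl], rule Bochner_Integration.integral_sum, rule tint)
    finally show ?thesis .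
  qed
  also have "\<dots> = (\<Sum>q\<in>?G. (\<integral>\<omega>. (f (Y q \<omega>))^2 \<partial>M) * integral\<^sup>L M (cc q))"
  proof (rule sum.cong[OF refl])
    fix q assume q: "q \<in> ?G"
    have "(\<Sum>q'\<in>?G. \<integral>\<omega>. f (Y q \<omega>) * cc q \<omega> * (f (Y q' \<omega>) * cc q' \<omega>) \<partial>M)
        = (\<Sum>q'\<in>?G. if q' = q then (\<integral>\<omega>. (f (Y q \<omega>))^2 \<partial>M) * integral\<^sup>L M (cc q) else 0)"
    proof (rule sum.cong[OF refl])
      fix q' assume q': "q' \<in> ?G"
      show "(\<integral>\<omega>. f (Y q \<omega>) * cc q \<omega> * (f (Y q' \<omega>) * cc q' \<omega>) \<partial>M)
          = (if q' = q then (\<integral>\<omega>. (f (Y q \<omega>))^2 \<partial>M) * integral\<^sup>L M (cc q) else 0)"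
      proof (cases "q' = q")
        case True
        have "(\<lambda>\<omega>. cc q \<omega> * cc q \<omega>) = cc q"
        proof
          fix \<omega> show "cc q \<omega> * cc q \<omega> = cc q \<omega>" using c01[OF q, of \<omega>] by auto
        qed
        then show ?thesis using trm[OF q q] True by (simp add: power2_eq_square)
      next
        case False
        have "(\<integral>\<omega>. f (Y q \<omega>) * f (Y q' \<omega>) \<partial>M) = 0"
          by (rule KEY[OF q q' _ f _ fce[OF q] f ffint[OF q q']]) (use False sq_int[OF fY[OF q] f2[OF q]] in auto)
        then show ?thesis using trm[OF q q'] False by simp
      qed
    qed
    also have "\<dots> = (\<integral>\<omega>. (f (Y q \<omega>))^2 \<partial>M) * integral\<^sup>L M (cc q)" using q by simp
    finally show "(\<Sum>q'\<in>?G. \<integral>\<omega>. f (Y q \<omega>) * cc q \<omega> * (f (Y q' \<omega>) * cc q' \<omega>) \<partial>M)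
        = (\<integral>\<omega>. (f (Y q \<omega>))^2 \<partial>M) * integral\<^sup>L M (cc q)" .
  qed
  also have "\<dots> \<le> (\<Sum>q\<in>?G. K * integral\<^sup>L M (cc q))"
  proof (rule sum_mono)
    fix q assume q: "q \<in> ?G"
    have "\<And>\<omega>. cc q \<omega> \<ge> 0" using c01[OF q] by (metis insert_iff empty_iff order_refl zero_le_one)
    then have "integral\<^sup>L M (cc q) \<ge> 0" by (intro integral_nonneg_AE) (auto intro!: AE_I2)
    then show "(\<integral>\<omega>. (f (Y q \<omega>))^2 \<partial>M) * integral\<^sup>L M (cc q) \<le> K * integral\<^sup>L M (cc q)"
      using fK[OF q] by (rule mult_right_mono[rotated])
  qed
  also have "\<dots> = K * (\<Sum>q\<in>?G. integral\<^sup>L M (cc q))" by (simp add: sum_distrib_left)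
  finally show "(\<integral>\<omega>. (\<Sum>q\<in>genG n. f (Y q \<omega>) * cc q \<omega>)^2 \<partial>M) \<le> K * (\<Sum>q\<in>genG n. integral\<^sup>L M (cc q))" .
qed

end




lemma contr:
  fixes t u :: "nat \<Rightarrow> real"
  assumes c: "0 \<le> c" "c < 1" and rec: "\<And>n. \<bar>t (Suc n)\<bar> \<le> c * \<bar>t n\<bar> + \<bar>u n\<bar>" and u: "u \<longlonglongrightarrow> 0"
  shows "t \<longlonglongrightarrow> 0"
proof (rule LIMSEQ_I)
  fix r :: real assume r: "r > 0"
  define d where "d = (1 - c) * (r/2)"
  have d: "d > 0" unfolding d_def using c r by simp
  obtain N where N: "\<And>n. n \<ge> N \<Longrightarrow> norm (u n) < d" using LIMSEQ_D[OF u d] by auto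
  have ind: "\<bar>t (N + m)\<bar> \<le> r/2 + c^m * \<bar>t N\<bar>" for m
  proof (induction m)
    case 0 then show ?case using r by simp
  next
    case (Suc m)
    have "\<bar>t (N + Suc m)\<bar> \<le> c * \<bar>t (N + m)\<bar> + \<bar>u (N + m)\<bar>" using rec[of "N+m"] by simp
    also have "\<dots> \<le> c * (r/2 + c^m * \<bar>t N\<bar>) + d"
      using Suc c N[of "N+m"] by (intro add_mono mult_left_mono) auto
    also have "\<dots> = r/2 + c^Suc m * \<bar>t N\<bar>" unfolding d_def by (simp add: field_simps)
    finally show ?case .
  qed
  have "(\<lambda>m. c^m * \<bar>t N\<bar>) \<longlonglongrightarrow> 0 * \<bar>t N\<bar>"
    by (intro tendsto_mult LIMSEQ_power_zero tendsto_const) (use c in auto)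
  then obtain M where M: "\<And>m. m \<ge> M \<Longrightarrow> norm (c^m * \<bar>t N\<bar>) < r/2"
    using LIMSEQ_D[of _ 0 "r/2"] r by force
  show "\<exists>no. \<forall>n\<ge>no. norm (t n - 0) < r"
  proof (intro exI allI impI)
    fix n assume n: "n \<ge> N + M"
    have "\<bar>t (N + (n - N))\<bar> \<le> r/2 + c^(n-N) * \<bar>t N\<bar>" by (rule ind)
    moreover have "c^(n-N) * \<bar>t N\<bar> < r/2"
    proof -
      have "norm (c^(n-N) * \<bar>t N\<bar>) < r/2" using M[of "n-N"] n by auto
      then show ?thesis by simp
    qed
    moreover have "N + (n - N) = n" using n by simp
    ultimately show "norm (t n - 0) < r" by simp
  qed
qed

lemma toep:
  fixes x :: "nat \<Rightarrow> real" and pp :: real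
  assumes pp: "pp > 1" and x: "(\<lambda>l. x l / pp^l) \<longlonglongrightarrow> L"
  shows "(\<lambda>n. (\<Sum>l\<in>{1..n}. x l) / pp^n) \<longlonglongrightarrow> L * (pp / (pp - 1))"
proof -
  define s where "s n = (\<Sum>l\<in>{1..n}. x l) / pp^n" for n
  define t where "t n = s n - L * (pp / (pp - 1))" for n
  define u where "u n = x (Suc n) / pp^(Suc n) - L" for n
  have pn: "pp^n > 0" for n using pp by simp
  have srec: "s (Suc n) = s n / pp + x (Suc n) / pp^(Suc n)" for n
    unfolding s_def using pn[of n] pp by (simp add: field_simps)
  have trec: "t (Suc n) = t n / pp + u n" for n
    unfolding t_def u_def srec using pp by (simp add: field_simps)
  have u: "u \<longlonglongrightarrow> 0"
  proof -
    have "(\<lambda>n. x (Suc n) / pp^(Suc n)) \<longlonglongrightarrow> L" using LIMSEQ_Suc[OF x] by simp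
    then have "(\<lambda>n. x (Suc n) / pp^(Suc n) - L) \<longlonglongrightarrow> L - L" by (intro tendsto_diff tendsto_const)
    then show ?thesis unfolding u_def by simp
  qed
  have "t \<longlonglongrightarrow> 0"
  proof (rule contr[of "1/pp"])
    show "0 \<le> 1/pp" "1/pp < 1" using pp by auto
    show "u \<longlonglongrightarrow> 0" by (rule u)
    fix n show "\<bar>t (Suc n)\<bar> \<le> 1/pp * \<bar>t n\<bar> + \<bar>u n\<bar>"
      unfolding trec using pp by (simp add: abs_triangle_ineq[THEN order_trans] abs_divide)
  qed
  then have "(\<lambda>n. t n + L * (pp / (pp - 1))) \<longlonglongrightarrow> 0 + L * (pp / (pp - 1))" by (intro tendsto_add tendsto_const)
  then show ?thesis unfolding t_def s_def by simp
qed

context prob_space begin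

lemma L2AS:
  fixes A :: "nat \<Rightarrow> 'a \<Rightarrow> real"
  assumes Am: "\<And>l. A l \<in> borel_measurable M"
    and Ai: "\<And>l. integrable M (\<lambda>\<omega>. (A l \<omega>)^2)"
    and Ab: "\<And>l. (\<integral>\<omega>. (A l \<omega>)^2 \<partial>M) \<le> C * r^l"
    and r: "0 \<le> r" "r < 1"
  shows "AE \<omega> in M. (\<lambda>l. A l \<omega>) \<longlonglongrightarrow> 0"
proof -
  have sr: "summable (\<lambda>l. C * r^l)" using r by (intro summable_mult summable_geometric) auto
  have nn: "(\<integral>\<^sup>+\<omega>. ennreal ((A l \<omega>)^2) \<partial>M) = ennreal (\<integral>\<omega>. (A l \<omega>)^2 \<partial>M)" for l
    by (rule nn_integral_eq_integral[OF Ai]) simp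
  have "(\<integral>\<^sup>+\<omega>. (\<Sum>l. ennreal ((A l \<omega>)^2)) \<partial>M) = (\<Sum>l. \<integral>\<^sup>+\<omega>. ennreal ((A l \<omega>)^2) \<partial>M)"
    by (rule nn_integral_suminf) (use Am in simp)
  also have "\<dots> = (\<Sum>l. ennreal (\<integral>\<omega>. (A l \<omega>)^2 \<partial>M))" by (simp add: nn)
  also have "\<dots> \<le> (\<Sum>l. ennreal (C * r^l))"
    by (intro suminf_le ennreal_leI Ab) auto
  also have "\<dots> = ennreal (\<Sum>l. C * r^l)"
  proof (rule suminf_ennreal2[OF _ sr])
    fix l have "0 \<le> (\<integral>\<omega>. (A l \<omega>)^2 \<partial>M)" by simp
    then show "0 \<le> C * r^l" using Ab[of l] by linarith
  qed
  also have "\<dots> < \<infinity>" by simp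
  finally have fin: "(\<integral>\<^sup>+\<omega>. (\<Sum>l. ennreal ((A l \<omega>)^2)) \<partial>M) \<noteq> \<infinity>" by simp
  have "AE \<omega> in M. (\<Sum>l. ennreal ((A l \<omega>)^2)) \<noteq> \<infinity>"
    by (rule nn_integral_PInf_AE[OF _ fin]) (use Am in simp)
  then show ?thesis
  proof (rule AE_mp[OF _ AE_I2], intro impI)
    fix \<omega> assume "(\<Sum>l. ennreal ((A l \<omega>)^2)) \<noteq> \<infinity>"
    then have "summable (\<lambda>l. (A l \<omega>)^2)" by (intro summable_suminf_not_top) auto
    then have "(\<lambda>l. (A l \<omega>)^2) \<longlonglongrightarrow> 0" by (rule summable_LIMSEQ_zero)
    then have "(\<lambda>l. sqrt ((A l \<omega>)^2)) \<longlonglongrightarrow> sqrt 0" by (rule tendsto_real_sqrt)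
    then have "(\<lambda>l. \<bar>A l \<omega>\<bar>) \<longlonglongrightarrow> 0" by simp
    then show "(\<lambda>l. A l \<omega>) \<longlonglongrightarrow> 0" by (rule tendsto_rabs_zero_cancel)
  qed
qed

end




lemma treeT_0: "treeT 0 = {1}" unfolding treeT_def by auto

lemma treeT_Suc: "treeT (Suc n) = treeT n \<union> genG (Suc n)"
  unfolding treeT_def genG_def by auto

lemma tree_sum:
  fixes F :: "nat \<Rightarrow> real"
  shows "(\<Sum>k\<in>{k \<in> treeT n. P k} - treeT 0. F k) = (\<Sum>l\<in>{1..n}. \<Sum>k\<in>{k\<in>genG l. P k}. F k)"
proof (induction n)
  case 0
  have "{k \<in> treeT 0. P k} - treeT 0 = {}" by auto
  then show ?case by (simp only: sum.empty) simp
next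
  case (Suc n)
  have e: "{k \<in> treeT (Suc n). P k} - treeT 0 = ({k \<in> treeT n. P k} - treeT 0) \<union> {k\<in>genG (Suc n). P k}"
  proof -
    have "(1::nat) \<le> 2^n" by simp
    then have h: "\<not> (2 * 2 ^ n \<le> Suc 0)" by linarith
    show ?thesis unfolding treeT_Suc treeT_0 genG_def using h by auto
  qed
  have d: "({k \<in> treeT n. P k} - treeT 0) \<inter> {k\<in>genG (Suc n). P k} = {}"
    unfolding treeT_def genG_def by auto
  have f: "finite ({k \<in> treeT n. P k} - treeT 0)" "finite {k\<in>genG (Suc n). P k}"
    unfolding treeT_def genG_def by auto
  show ?case unfolding e sum.union_disjoint[OF f d] Suc by simp
qed

context bar begin

lemma genG_Suc_ge2: "k \<in> genG (Suc n) \<Longrightarrow> k \<ge> 2"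
  unfolding genG_def by (auto intro: order.trans[rotated] simp: Suc_le_eq)

lemma eps_mom:
  assumes k: "k \<in> genG (Suc n)"
  shows "integrable M (\<lambda>\<omega>. (eps k \<omega>)^4)" "integrable M (\<lambda>\<omega>. (eps k \<omega>)^2)"
    "integrable M (eps k)" "(\<integral>\<omega>. (eps k \<omega>)^4 \<partial>M) = tau4"
proof -
  interpret S: sigma_finite_subalgebra M "natF M X n" by (rule natF_sfs)
  have m: "eps k \<in> borel_measurable M" using eps_meas genG_Suc_ge2[OF k] by simp
  have i8: "integrable M (\<lambda>\<omega>. ((eps k \<omega>)^4)^2)" using eps_L8[OF k] by (simp add: power_mult[symmetric])
  show i4: "integrable M (\<lambda>\<omega>. (eps k \<omega>)^4)" by (rule sq_int[OF _ i8]) (use m in simp)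
  have "integrable M (\<lambda>\<omega>. ((eps k \<omega>)^2)^2)" using i4 by (simp add: power_mult[symmetric])
  then show i2: "integrable M (\<lambda>\<omega>. (eps k \<omega>)^2)" by (rule sq_int[rotated]) (use m in simp)
  show "integrable M (eps k)" by (rule sq_int[OF m i2])
  have "(\<integral>\<omega>. (eps k \<omega>)^4 \<partial>M) = (\<integral>\<omega>. real_cond_exp M (natF M X n) (\<lambda>x. (eps k x)^4) \<omega> \<partial>M)"
    by (rule S.real_cond_exp_int(2)[OF i4, symmetric])
  also have "\<dots> = (\<integral>\<omega>. tau4 \<partial>M)" by (rule integral_cong_AE) (use ce4[OF k] in auto)
  finally show "(\<integral>\<omega>. (eps k \<omega>)^4 \<partial>M) = tau4" by (simp add: prob_space)
qed

lemma tau4_nonneg: "tau4 \<ge> 0"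
proof -
  have k: "2 \<in> genG (Suc 0)" unfolding genG_def by simp
  have "0 \<le> (\<integral>\<omega>. (eps 2 \<omega>)^4 \<partial>M)" by (rule integral_nonneg_AE) (auto intro!: AE_I2)
  then show ?thesis using eps_mom(4)[OF k] by simp
qed

lemma ce_const: "AE \<omega> in M. real_cond_exp M (natF M X n) (\<lambda>_. cst) \<omega> = cst"
proof -
  interpret S: sigma_finite_subalgebra M "natF M X n" by (rule natF_sfs)
  show ?thesis by (rule S.real_cond_exp_F_meas) auto
qed

lemma L2AS':
  fixes S :: "nat \<Rightarrow> 'a \<Rightarrow> real"
  assumes Sm: "\<And>l. S l \<in> borel_measurable M"
    and Si: "\<And>l. integrable M (\<lambda>\<omega>. (S l \<omega>)^2)"
    and Sb: "\<And>l. (\<integral>\<omega>. (S l \<omega>)^2 \<partial>M) \<le> C * pi^l"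
  shows "AE \<omega> in M. (\<lambda>l. S l \<omega> / pi^l) \<longlonglongrightarrow> 0"
proof (rule L2AS[where C=C and r="1/pi"])
  fix l
  have pl: "pi^l > 0" using pi_gt1 by simp
  show "(\<lambda>\<omega>. S l \<omega> / pi^l) \<in> borel_measurable M" using Sm[of l] by simp
  show "integrable M (\<lambda>\<omega>. (S l \<omega> / pi^l)^2)" using Si[of l] by (simp add: power_divide)
  have "(\<integral>\<omega>. (S l \<omega> / pi^l)^2 \<partial>M) = (\<integral>\<omega>. (S l \<omega>)^2 \<partial>M) / (pi^l)^2"
    by (simp add: power_divide)
  also have "\<dots> \<le> C * pi^l / (pi^l)^2" using Sb[of l] pl by (intro divide_right_mono) auto
  also have "\<dots> = C * (1/pi)^l" using pl by (simp add: power2_eq_square field_simps power_one_over)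
  finally show "(\<integral>\<omega>. (S l \<omega> / pi^l)^2 \<partial>M) \<le> C * (1/pi)^l" .
qed (use pi_gt1 in auto)


lemma eps_sq_int: assumes k: "k \<in> genG (Suc n)" shows "(\<integral>\<omega>. (eps k \<omega>)^2 \<partial>M) = sigma2"
proof -
  interpret S: sigma_finite_subalgebra M "natF M X n" by (rule natF_sfs)
  have "(\<integral>\<omega>. (eps k \<omega>)^2 \<partial>M) = (\<integral>\<omega>. real_cond_exp M (natF M X n) (\<lambda>x. (eps k x)^2) \<omega> \<partial>M)"
    by (rule S.real_cond_exp_int(2)[OF eps_mom(2)[OF k], symmetric])
  also have "\<dots> = (\<integral>\<omega>. sigma2 \<partial>M)" by (rule integral_cong_AE) (use ce2[OF k] in auto)
  finally show ?thesis by (simp add: prob_space)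
qed

definition fU :: "nat \<Rightarrow> real \<times> real \<Rightarrow> real" where
  "fU i y = (if i = 0 then fst y else snd y)^2 - sigma2"

lemma fU_Y: "i < 2 \<Longrightarrow> fU i (Y q \<omega>) = (eps (2*q+i) \<omega>)^2 - sigma2"
  unfolding fU_def Y_def by (auto simp: less_2_cases_iff)

lemma fU_meas: "fU i \<in> borel_measurable borel"
  unfolding fU_def by (rule borel_measurable_continuous_onI) (cases "i = 0"; auto intro!: continuous_intros)

lemma fU_props:
  assumes q: "q \<in> genG n" and i: "i < 2"
  shows "integrable M (\<lambda>\<omega>. (fU i (Y q \<omega>))^2)"
    "AE \<omega> in M. real_cond_exp M (natF M X n) (\<lambda>\<omega>. fU i (Y q \<omega>)) \<omega> = 0"
    "(\<integral>\<omega>. (fU i (Y q \<omega>))^2 \<partial>M) \<le> tau4"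
proof -
  interpret S: sigma_finite_subalgebra M "natF M X n" by (rule natF_sfs)
  define k where "k = 2*q+i"
  have k: "k \<in> genG (Suc n)" unfolding k_def by (rule genG_child[OF q]) (use i in simp)
  note m = eps_mom[OF k]
  have eq: "(\<lambda>\<omega>. (fU i (Y q \<omega>))^2) = (\<lambda>\<omega>. (eps k \<omega>)^4 - 2 * sigma2 * (eps k \<omega>)^2 + sigma2^2)"
    unfolding k_def fU_Y[OF i] by (rule ext) (simp add: power2_eq_square power4_eq_xxxx algebra_simps)
  show "integrable M (\<lambda>\<omega>. (fU i (Y q \<omega>))^2)" unfolding eq using m(1,2) by simp
  have "(\<integral>\<omega>. (fU i (Y q \<omega>))^2 \<partial>M) = tau4 - 2 * sigma2 * sigma2 + sigma2^2"
    unfolding eq using m eps_sq_int[OF k] by (simp add: prob_space)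
  then show "(\<integral>\<omega>. (fU i (Y q \<omega>))^2 \<partial>M) \<le> tau4" by (simp add: power2_eq_square)
  have eq2: "(\<lambda>\<omega>. fU i (Y q \<omega>)) = (\<lambda>\<omega>. (eps k \<omega>)^2 - sigma2)"
    unfolding k_def fU_Y[OF i] ..
  have "AE \<omega> in M. real_cond_exp M (natF M X n) (\<lambda>\<omega>. (eps k \<omega>)^2 - sigma2) \<omega>
      = real_cond_exp M (natF M X n) (\<lambda>\<omega>. (eps k \<omega>)^2) \<omega> - real_cond_exp M (natF M X n) (\<lambda>_. sigma2) \<omega>"
    by (rule S.real_cond_exp_diff) (use m in auto)
  then show "AE \<omega> in M. real_cond_exp M (natF M X n) (\<lambda>\<omega>. fU i (Y q \<omega>)) \<omega> = 0"
    unfolding eq2 using ce2[OF k] ce_const[of n sigma2] by eventually_elim simp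
qed

definition fV :: "real \<times> real \<Rightarrow> real" where
  "fV y = fst y * snd y - rhop * sigma2"

lemma fV_meas: "fV \<in> borel_measurable borel"
  unfolding fV_def by (rule borel_measurable_continuous_onI) (auto intro!: continuous_intros)

lemma fV_props:
  assumes q: "q \<in> genG n"
  shows "integrable M (\<lambda>\<omega>. (fV (Y q \<omega>))^2)"
    "AE \<omega> in M. real_cond_exp M (natF M X n) (\<lambda>\<omega>. fV (Y q \<omega>)) \<omega> = 0"
    "(\<integral>\<omega>. (fV (Y q \<omega>))^2 \<partial>M) \<le> 2 * tau4 + 2 * (rhop * sigma2)^2"
proof -
  interpret S: sigma_finite_subalgebra M "natF M X n" by (rule natF_sfs)
  have k0: "2*q \<in> genG (Suc n)" using genG_child[OF q, of 0] by simp
  have k1: "2*q+1 \<in> genG (Suc n)" using genG_child[OF q, of 1] by simp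
  note m0 = eps_mom[OF k0] and m1 = eps_mom[OF k1]
  have e0: "eps (2*q) \<in> borel_measurable M" and e1: "eps (2*q+1) \<in> borel_measurable M"
    using eps_meas genG_Suc_ge2[OF k0] genG_Suc_ge2[OF k1] by auto
  have p01: "integrable M (\<lambda>\<omega>. eps (2*q) \<omega> * eps (2*q+1) \<omega>)"
    by (rule sq_prod_int[OF e0 e1 m0(2) m1(2)])
  have p22: "integrable M (\<lambda>\<omega>. (eps (2*q) \<omega>)^2 * (eps (2*q+1) \<omega>)^2)"
  proof (rule sq_prod_int)
    show "integrable M (\<lambda>\<omega>. ((eps (2*q) \<omega>)^2)^2)" using m0(1) by (simp add: power_mult[symmetric])
    show "integrable M (\<lambda>\<omega>. ((eps (2*q+1) \<omega>)^2)^2)" using m1(1) by (simp add: power_mult[symmetric])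
  qed (use e0 e1 in simp_all)
  have eq: "(\<lambda>\<omega>. (fV (Y q \<omega>))^2) = (\<lambda>\<omega>. (eps (2*q) \<omega>)^2 * (eps (2*q+1) \<omega>)^2
        - 2 * (rhop * sigma2) * (eps (2*q) \<omega> * eps (2*q+1) \<omega>) + (rhop * sigma2)^2)"
    unfolding fV_def Y_def by (rule ext) (simp add: power2_eq_square algebra_simps)
  show fi: "integrable M (\<lambda>\<omega>. (fV (Y q \<omega>))^2)" unfolding eq using p01 p22 by simp
  have "(\<integral>\<omega>. (fV (Y q \<omega>))^2 \<partial>M) \<le> (\<integral>\<omega>. (eps (2*q) \<omega>)^4 + (eps (2*q+1) \<omega>)^4 + 2 * (rhop * sigma2)^2 \<partial>M)"
  proof (rule integral_mono[OF fi])
    show "integrable M (\<lambda>\<omega>. (eps (2*q) \<omega>)^4 + (eps (2*q+1) \<omega>)^4 + 2 * (rhop * sigma2)^2)"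
      using m0(1) m1(1) by simp
    fix \<omega>
    define x where "x = eps (2*q) \<omega>"
    define y where "y = eps (2*q+1) \<omega>"
    define r where "r = rhop * sigma2"
    have "2*(x*y)^2 + 2*r^2 - (x*y - r)^2 = (x*y + r)^2" by (simp add: power2_eq_square algebra_simps)
    then have "(x*y - r)^2 \<le> 2*(x*y)^2 + 2*r^2" using zero_le_power2[of "x*y + r"] by linarith
    moreover have "x^4 + y^4 - 2*(x*y)^2 = (x^2 - y^2)^2" by (simp add: power2_eq_square power4_eq_xxxx algebra_simps)
    then have "2*(x*y)^2 \<le> x^4 + y^4" using zero_le_power2[of "x^2 - y^2"] by linarith
    ultimately show "(fV (Y q \<omega>))^2 \<le> (eps (2*q) \<omega>)^4 + (eps (2*q+1) \<omega>)^4 + 2 * (rhop * sigma2)^2"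
      unfolding fV_def Y_def x_def[symmetric] y_def[symmetric] r_def[symmetric] by simp
  qed
  also have "\<dots> = 2 * tau4 + 2 * (rhop * sigma2)^2" using m0 m1 by (simp add: prob_space)
  finally show "(\<integral>\<omega>. (fV (Y q \<omega>))^2 \<partial>M) \<le> 2 * tau4 + 2 * (rhop * sigma2)^2" .
  have eq2: "(\<lambda>\<omega>. fV (Y q \<omega>)) = (\<lambda>\<omega>. eps (2*q) \<omega> * eps (2*q+1) \<omega> - rhop * sigma2)"
    unfolding fV_def Y_def by simp
  have "AE \<omega> in M. real_cond_exp M (natF M X n) (\<lambda>\<omega>. eps (2*q) \<omega> * eps (2*q+1) \<omega> - rhop * sigma2) \<omega>
      = real_cond_exp M (natF M X n) (\<lambda>\<omega>. eps (2*q) \<omega> * eps (2*q+1) \<omega>) \<omega> - real_cond_exp M (natF M X n) (\<lambda>_. rhop * sigma2) \<omega>"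
    by (rule S.real_cond_exp_diff) (use p01 in auto)
  then show "AE \<omega> in M. real_cond_exp M (natF M X n) (\<lambda>\<omega>. fV (Y q \<omega>)) \<omega> = 0"
    unfolding eq2 using cc1[OF q] ce_const[of n "rhop * sigma2"] by eventually_elim simp
qed


lemma delta_le: "k \<ge> 1 \<Longrightarrow> j < 2 \<Longrightarrow> real (delta (2*k+j) \<omega>) \<le> real (delta k \<omega>)"
  using delta_child[of k j \<omega>] zeta_val[of k \<omega>] delta_01[of k \<omega>]
  by (auto simp: comp_def less_2_cases_iff)

lemma delta_int_mono: "k \<ge> 1 \<Longrightarrow> j < 2 \<Longrightarrow> (\<integral>\<omega>. real (delta (2*k+j) \<omega>) \<partial>M) \<le> (\<integral>\<omega>. real (delta k \<omega>) \<partial>M)"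
  by (rule integral_mono[OF delta_int delta_int delta_le]) auto

lemma delta_real01: "k \<ge> 1 \<Longrightarrow> real (delta k \<omega>) \<in> {0,1}"
  using delta_01[of k \<omega>] by auto

lemma conv_U1:
  assumes i: "i < 2" and j: "j < 2"
  shows "AE \<omega> in M. (\<lambda>l. (\<Sum>q\<in>genG l. fU i (Y q \<omega>) * real (delta (2*(2*q+i)+j) \<omega>)) / pi^l) \<longlonglongrightarrow> 0"
proof (rule L2AS'[where C="tau4 * (Cd * pi)"])
  fix l
  let ?cc = "\<lambda>q \<omega>. real (delta (2*(2*q+i)+j) \<omega>)"
  have q1: "q \<in> genG l \<Longrightarrow> q \<ge> 1" for q using genG_ge1 by auto
  have cc: "?cc q \<in> borel_measurable ZH" "?cc q \<omega> \<in> {0,1}" if "q \<in> genG l" for q \<omega>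
  proof -
    have "2*(2*q+i)+j \<ge> 1" using q1[OF that] by simp
    then show "?cc q \<in> borel_measurable ZH" "?cc q \<omega> \<in> {0,1}"
      using delta_ZH[of "2*(2*q+i)+j"] delta_real01[of "2*(2*q+i)+j" \<omega>] by auto
  qed
  note U = U_L2[where n=l and f="fU i" and cc="\<lambda>q \<omega>. real (delta (2*(2*q+i)+j) \<omega>)", OF fU_meas fU_props(1)[where n=l, OF _ i] fU_props(2)[where n=l, OF _ i] fU_props(3)[where n=l, OF _ i] cc(1) cc(2)]
  show "integrable M (\<lambda>\<omega>. (\<Sum>q\<in>genG l. fU i (Y q \<omega>) * real (delta (2*(2*q+i)+j) \<omega>))^2)"
    by (rule U(1))
  show "(\<lambda>\<omega>. \<Sum>q\<in>genG l. fU i (Y q \<omega>) * real (delta (2*(2*q+i)+j) \<omega>)) \<in> borel_measurable M"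
  proof (rule borel_measurable_sum, rule borel_measurable_times)
    fix q assume q: "q \<in> genG l"
    show "(\<lambda>\<omega>. fU i (Y q \<omega>)) \<in> borel_measurable M" by (rule measurable_compose[OF Y_meas[OF q1[OF q]] fU_meas])
    show "(\<lambda>\<omega>. real (delta (2*(2*q+i)+j) \<omega>)) \<in> borel_measurable M" by (rule delta_M) (use q1[OF q] in simp)
  qed
  have "(\<Sum>q\<in>genG l. integral\<^sup>L M (?cc q)) \<le> (\<Sum>q\<in>genG l. \<integral>\<omega>. real (delta (2*q+i) \<omega>) \<partial>M)"
    by (rule sum_mono, rule delta_int_mono[OF _ j]) (use q1 in force)
  also have "\<dots> = ed (Suc l) i" unfolding ed_def sum_genG_par[OF i] ..
  also have "\<dots> \<le> Cd * pi^(Suc l)" by (rule ed_bound[OF i])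
  finally have "tau4 * (\<Sum>q\<in>genG l. integral\<^sup>L M (?cc q)) \<le> tau4 * (Cd * pi^(Suc l))"
    by (rule mult_left_mono) (rule tau4_nonneg)
  then show "(\<integral>\<omega>. (\<Sum>q\<in>genG l. fU i (Y q \<omega>) * real (delta (2*(2*q+i)+j) \<omega>))^2 \<partial>M) \<le> tau4 * (Cd * pi) * pi^l"
    using U(2) by (simp add: ac_simps)
qed

lemma conv_U2:
  shows "AE \<omega> in M. (\<lambda>l. (\<Sum>q\<in>genG l. fV (Y q \<omega>) * real (delta (2*q) \<omega> * delta (2*q+1) \<omega>)) / pi^l) \<longlonglongrightarrow> 0"
proof (rule L2AS'[where C="(2 * tau4 + 2 * (rhop * sigma2)^2) * (2 * Cd)"])
  fix l
  let ?cc = "\<lambda>q \<omega>. real (delta (2*q) \<omega> * delta (2*q+1) \<omega>)"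
  have q1: "q \<in> genG l \<Longrightarrow> q \<ge> 1" for q using genG_ge1 by auto
  have cc: "?cc q \<in> borel_measurable ZH" "?cc q \<omega> \<in> {0,1}" if "q \<in> genG l" for q \<omega>
  proof -
    show "?cc q \<in> borel_measurable ZH"
      using delta_ZH[of "2*q"] delta_ZH[of "2*q+1"] that q1 by simp
    show "?cc q \<omega> \<in> {0,1}" using delta_01[of "2*q" \<omega>] delta_01[of "2*q+1" \<omega>] that q1 by auto
  qed
  note U = U_L2[where n=l and f=fV and cc="\<lambda>q \<omega>. real (delta (2*q) \<omega> * delta (2*q+1) \<omega>)", OF fV_meas fV_props(1)[where n=l] fV_props(2)[where n=l] fV_props(3)[where n=l] cc(1) cc(2)]
  show "integrable M (\<lambda>\<omega>. (\<Sum>q\<in>genG l. fV (Y q \<omega>) * real (delta (2*q) \<omega> * delta (2*q+1) \<omega>))^2)"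
    by (rule U(1))
  show "(\<lambda>\<omega>. \<Sum>q\<in>genG l. fV (Y q \<omega>) * real (delta (2*q) \<omega> * delta (2*q+1) \<omega>)) \<in> borel_measurable M"
  proof (rule borel_measurable_sum, rule borel_measurable_times)
    fix q assume q: "q \<in> genG l"
    show "(\<lambda>\<omega>. fV (Y q \<omega>)) \<in> borel_measurable M" by (rule measurable_compose[OF Y_meas[OF q1[OF q]] fV_meas])
    show "?cc q \<in> borel_measurable M" by (rule measurable_from_subalg[OF ZH_subalg cc(1)[OF q]])
  qed
  have "(\<Sum>q\<in>genG l. integral\<^sup>L M (?cc q)) \<le> (\<Sum>q\<in>genG l. \<integral>\<omega>. real (delta q \<omega>) \<partial>M)"
  proof (rule sum_mono)
    fix q assume q: "q \<in> genG l"
    have "(\<integral>\<omega>. ?cc q \<omega> \<partial>M) \<le> (\<integral>\<omega>. real (delta (2*q) \<omega>) \<partial>M)"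
    proof (rule integral_mono)
      show "integrable M (?cc q)"
      proof (rule integrable_const_bound[where B=1])
        show "AE \<omega> in M. norm (?cc q \<omega>) \<le> 1"
        proof (rule AE_I2)
          fix \<omega> show "norm (?cc q \<omega>) \<le> 1" using cc(2)[OF q, of \<omega>] by (auto simp del: of_nat_mult)
        qed
        show "?cc q \<in> borel_measurable M" by (rule measurable_from_subalg[OF ZH_subalg cc(1)[OF q]])
      qed
      show "integrable M (\<lambda>\<omega>. real (delta (2*q) \<omega>))" by (rule delta_int) (use q1[OF q] in simp)
      fix \<omega> show "?cc q \<omega> \<le> real (delta (2*q) \<omega>)"
        using delta_01[of "2*q" \<omega>] delta_01[of "2*q+1" \<omega>] q1[OF q] by auto
    qed
    also have "\<dots> \<le> (\<integral>\<omega>. real (delta q \<omega>) \<partial>M)" using delta_int_mono[OF q1[OF q], of 0] by simp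
    finally show "integral\<^sup>L M (?cc q) \<le> (\<integral>\<omega>. real (delta q \<omega>) \<partial>M)" .
  qed
  also have "\<dots> \<le> 2 * Cd * pi^l" by (rule Ed_bound)
  finally have KK: "(2 * tau4 + 2 * (rhop * sigma2)^2) * (\<Sum>q\<in>genG l. integral\<^sup>L M (?cc q))
      \<le> (2 * tau4 + 2 * (rhop * sigma2)^2) * (2 * Cd * pi^l)"
    by (rule mult_left_mono) (use tau4_nonneg in simp)
  then show "(\<integral>\<omega>. (\<Sum>q\<in>genG l. fV (Y q \<omega>) * real (delta (2*q) \<omega> * delta (2*q+1) \<omega>))^2 \<partial>M)
      \<le> (2 * tau4 + 2 * (rhop * sigma2)^2) * (2 * Cd) * pi^l"
    using order_trans[OF U(2) KK] by (simp add: mult.assoc)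
qed


lemma conv_D1:
  assumes i: "i < 2" and j: "j < 2"
  shows "AE \<omega> in M. (\<lambda>l. (\<Sum>k\<in>{k \<in> genG (Suc l). k mod 2 = i}.
            real (delta k \<omega>) * (real (comp j (zeta k \<omega>)) - Pmat p i j)) / pi^l) \<longlonglongrightarrow> 0"
proof (rule L2AS'[where C="(1 + \<bar>Pmat p i j\<bar>)^2 * (Cd * pi)"])
  fix l
  let ?S = "{k \<in> genG (Suc l). k mod 2 = i}"
  let ?h = "\<lambda>k v. real (comp j v) - Pmat p i j"
  have S: "finite ?S" "?S \<subseteq> {1..}" using genG_ge1 by auto
  have hb: "\<bar>?h k v\<bar> \<le> 1 + \<bar>Pmat p i j\<bar>" if "v \<in> {0,1}\<times>{0,1}" for k v
  proof -
    have "real (comp j v) \<in> {0,1}" using that by (auto simp: comp_def)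
    then show ?thesis by auto
  qed
  have h0: "(\<integral>\<omega>. ?h k (zeta k \<omega>) \<partial>M) = 0" if "k \<in> ?S" for k
  proof -
    have k1: "k \<ge> 1" using that genG_ge1 by auto
    have "(\<integral>\<omega>. ?h k (zeta k \<omega>) \<partial>M) = (\<integral>\<omega>. real (comp j (zeta k \<omega>)) \<partial>M) - Pmat p i j"
      using zeta_int(1)[OF k1, of "\<lambda>v. real (comp j v)"] by (simp add: prob_space)
    also have "\<dots> = 0" using comp_int[OF k1 j] that by simp
    finally show ?thesis .
  qed
  note DL = D_L2[OF S, of ?h "1 + \<bar>Pmat p i j\<bar>", OF hb h0]
  show "integrable M (\<lambda>\<omega>. (\<Sum>k\<in>?S. real (delta k \<omega>) * (real (comp j (zeta k \<omega>)) - Pmat p i j))^2)"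
    by (rule DL(1))
  show "(\<lambda>\<omega>. \<Sum>k\<in>?S. real (delta k \<omega>) * (real (comp j (zeta k \<omega>)) - Pmat p i j)) \<in> borel_measurable M"
  proof (rule borel_measurable_sum, rule borel_measurable_times)
    fix k assume "k \<in> ?S"
    then have k1: "k \<ge> 1" using genG_ge1 by auto
    show "(\<lambda>\<omega>. real (delta k \<omega>)) \<in> borel_measurable M" by (rule delta_M[OF k1])
    show "(\<lambda>\<omega>. real (comp j (zeta k \<omega>)) - Pmat p i j) \<in> borel_measurable M" by (rule h_meas[OF k1])
  qed
  have "(\<Sum>k\<in>?S. \<integral>\<omega>. real (delta k \<omega>) \<partial>M) \<le> Cd * pi^(Suc l)"
    using ed_bound[OF i, of "Suc l"] unfolding ed_def .
  then have "(1 + \<bar>Pmat p i j\<bar>)^2 * (\<Sum>k\<in>?S. \<integral>\<omega>. real (delta k \<omega>) \<partial>M) \<le> (1 + \<bar>Pmat p i j\<bar>)^2 * (Cd * pi^(Suc l))"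
    by (rule mult_left_mono) simp
  from order_trans[OF DL(2) this]
  show "(\<integral>\<omega>. (\<Sum>k\<in>?S. real (delta k \<omega>) * (real (comp j (zeta k \<omega>)) - Pmat p i j))^2 \<partial>M)
      \<le> (1 + \<bar>Pmat p i j\<bar>)^2 * (Cd * pi) * pi^l" by (simp add: ac_simps)
qed

lemma conv_D2:
  shows "AE \<omega> in M. (\<lambda>l. (\<Sum>k\<in>genG l.
            real (delta k \<omega>) * (real (fst (zeta k \<omega>) * snd (zeta k \<omega>)) - p (k mod 2) 1 1)) / pi^l) \<longlonglongrightarrow> 0"
proof (rule L2AS'[where C="(1 + \<bar>p 0 1 1\<bar> + \<bar>p 1 1 1\<bar>)^2 * (2 * Cd)"])
  fix l
  let ?S = "genG l"
  let ?H = "1 + \<bar>p 0 1 1\<bar> + \<bar>p 1 1 1\<bar>"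
  let ?h = "\<lambda>k v. real (fst v * snd v) - p (k mod 2) 1 1"
  have S: "finite ?S" "?S \<subseteq> {1..}" using genG_ge1 by auto
  have hb: "\<bar>?h k v\<bar> \<le> ?H" if "v \<in> {0,1}\<times>{0,1}" for k v
  proof -
    have "real (fst v * snd v) \<in> {0,1}" using that by auto
    moreover have "\<bar>p (k mod 2) 1 1\<bar> \<le> \<bar>p 0 1 1\<bar> + \<bar>p 1 1 1\<bar>"
      by (cases "k mod 2 = 0") (auto simp: mod2_eq_if split: if_splits)
    ultimately show ?thesis by auto
  qed
  have h0: "(\<integral>\<omega>. ?h k (zeta k \<omega>) \<partial>M) = 0" if "k \<in> ?S" for k
  proof -
    have k1: "k \<ge> 1" using that genG_ge1 by auto
    have "(\<integral>\<omega>. ?h k (zeta k \<omega>) \<partial>M) = (\<integral>\<omega>. real (fst (zeta k \<omega>) * snd (zeta k \<omega>)) \<partial>M) - p (k mod 2) 1 1"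
      using zeta_int(1)[OF k1, of "\<lambda>v. real (fst v * snd v)"] by (simp add: prob_space)
    also have "\<dots> = 0" using prod_int[OF k1] by simp
    finally show ?thesis .
  qed
  note DL = D_L2[OF S, of ?h ?H, OF hb h0]
  show "integrable M (\<lambda>\<omega>. (\<Sum>k\<in>?S. real (delta k \<omega>) * (real (fst (zeta k \<omega>) * snd (zeta k \<omega>)) - p (k mod 2) 1 1))^2)"
    by (rule DL(1))
  show "(\<lambda>\<omega>. \<Sum>k\<in>?S. real (delta k \<omega>) * (real (fst (zeta k \<omega>) * snd (zeta k \<omega>)) - p (k mod 2) 1 1)) \<in> borel_measurable M"
  proof (rule borel_measurable_sum, rule borel_measurable_times)
    fix k assume "k \<in> ?S"
    then have k1: "k \<ge> 1" using genG_ge1 by auto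
    show "(\<lambda>\<omega>. real (delta k \<omega>)) \<in> borel_measurable M" by (rule delta_M[OF k1])
    show "(\<lambda>\<omega>. real (fst (zeta k \<omega>) * snd (zeta k \<omega>)) - p (k mod 2) 1 1) \<in> borel_measurable M"
      by (rule h_meas[OF k1, of "\<lambda>v. real (fst v * snd v) - p (k mod 2) 1 1"])
  qed
  have "?H^2 * (\<Sum>k\<in>?S. \<integral>\<omega>. real (delta k \<omega>) \<partial>M) \<le> ?H^2 * (2 * Cd * pi^l)"
    by (rule mult_left_mono[OF Ed_bound]) simp
  from order_trans[OF DL(2) this]
  show "(\<integral>\<omega>. (\<Sum>k\<in>?S. real (delta k \<omega>) * (real (fst (zeta k \<omega>) * snd (zeta k \<omega>)) - p (k mod 2) 1 1))^2 \<partial>M)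
      \<le> ?H^2 * (2 * Cd) * pi^l" by (simp add: mult.assoc)
qed


lemma sum_delta_card:
  assumes "finite S" "S \<subseteq> {1..}"
  shows "(\<Sum>k\<in>S. real (delta k \<omega>)) = real (card {k\<in>S. delta k \<omega> = 1})"
proof -
  have "(\<Sum>k\<in>S. real (delta k \<omega>)) = (\<Sum>k\<in>S. if delta k \<omega> = 1 then 1 else 0)"
  proof (rule sum.cong[OF refl])
    fix k assume "k \<in> S"
    then have "delta k \<omega> \<in> {0,1}" using assms delta_01 by auto
    then show "real (delta k \<omega>) = (if delta k \<omega> = 1 then 1 else 0)" by auto
  qed
  also have "\<dots> = real (card {k\<in>S. delta k \<omega> = 1})"
    using assms(1) by (simp add: sum.If_cases Int_def)
  finally show ?thesis .
qed


lemma final1: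
  assumes i: "i < 2" and j: "j < 2"
  shows "AE \<omega> in M.
            (\<lambda>n. (\<Sum>k \<in> {k \<in> treeT n. k mod 2 = i} - treeT 0.
                      (eps k \<omega>)^2 * real (delta (2*k+j) \<omega>)) / pi ^ n)
              \<longlonglongrightarrow> sigma2 * Pmat p i j * (pi / (pi - 1)) * W \<omega> * z i"
  using conv_U1[OF i j] conv_D1[OF i j] W_lim
proof eventually_elim
  case (elim \<omega>)
  have pi0: "pi \<noteq> 0" using pi_gt1 by simp
  define x where "x l = (\<Sum>k\<in>{k\<in>genG l. k mod 2 = i}. (eps k \<omega>)^2 * real (delta (2*k+j) \<omega>))" for l
  define U where "U l = (\<Sum>q\<in>genG l. fU i (Y q \<omega>) * real (delta (2*(2*q+i)+j) \<omega>))" for l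
  define D where "D l = (\<Sum>k\<in>{k \<in> genG (Suc l). k mod 2 = i}.
            real (delta k \<omega>) * (real (comp j (zeta k \<omega>)) - Pmat p i j))" for l
  define cd where "cd l = real (card {k \<in> genG l. k mod 2 = i \<and> delta k \<omega> = 1})" for l
  have xs: "x (Suc l) = U l + sigma2 * (D l + Pmat p i j * cd (Suc l))" for l
  proof -
    have "x (Suc l) = (\<Sum>q\<in>genG l. (eps (2*q+i) \<omega>)^2 * real (delta (2*(2*q+i)+j) \<omega>))"
      unfolding x_def by (rule sum_genG_par[OF i])
    also have "\<dots> = (\<Sum>q\<in>genG l. fU i (Y q \<omega>) * real (delta (2*(2*q+i)+j) \<omega>) + sigma2 * real (delta (2*(2*q+i)+j) \<omega>))"
      by (rule sum.cong[OF refl]) (simp add: fU_Y[OF i] algebra_simps)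
    also have "\<dots> = U l + sigma2 * (\<Sum>q\<in>genG l. real (delta (2*(2*q+i)+j) \<omega>))"
      unfolding U_def by (simp add: sum.distrib sum_distrib_left)
    also have "(\<Sum>q\<in>genG l. real (delta (2*(2*q+i)+j) \<omega>)) = (\<Sum>k\<in>{k \<in> genG (Suc l). k mod 2 = i}. real (delta (2*k+j) \<omega>))"
      by (rule sum_genG_par[OF i, symmetric])
    also have "\<dots> = (\<Sum>k\<in>{k \<in> genG (Suc l). k mod 2 = i}.
            real (delta k \<omega>) * (real (comp j (zeta k \<omega>)) - Pmat p i j) + Pmat p i j * real (delta k \<omega>))"
    proof (rule sum.cong[OF refl])
      fix k assume "k \<in> {k \<in> genG (Suc l). k mod 2 = i}"
      then have k1: "k \<ge> 1" using genG_ge1 by auto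
      show "real (delta (2*k+j) \<omega>) = real (delta k \<omega>) * (real (comp j (zeta k \<omega>)) - Pmat p i j) + Pmat p i j * real (delta k \<omega>)"
        unfolding delta_child[OF k1 j] by (simp add: algebra_simps)
    qed
    also have "\<dots> = D l + Pmat p i j * (\<Sum>k\<in>{k \<in> genG (Suc l). k mod 2 = i}. real (delta k \<omega>))"
      unfolding D_def by (simp add: sum.distrib sum_distrib_left)
    also have "(\<Sum>k\<in>{k \<in> genG (Suc l). k mod 2 = i}. real (delta k \<omega>)) = cd (Suc l)"
      unfolding cd_def by (subst sum_delta_card) (auto dest: genG_ge1 intro!: arg_cong[where f="\<lambda>S. real (card S)"])
    finally show ?thesis .
  qed
  have cdl: "(\<lambda>l. cd l / pi^l) \<longlonglongrightarrow> W \<omega> * z i"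
    using elim(3) i unfolding cd_def by (auto simp: less_2_cases_iff)
  have "(\<lambda>l. x (Suc l) / pi^(Suc l)) \<longlonglongrightarrow> (0 / pi + sigma2 * (0 / pi + Pmat p i j * (W \<omega> * z i)))"
  proof -
    have e: "x (Suc l) / pi^(Suc l) = (U l / pi^l) / pi + sigma2 * ((D l / pi^l) / pi + Pmat p i j * (cd (Suc l) / pi^(Suc l)))" for l
      unfolding xs using pi0 by (simp add: field_simps)
    have "(\<lambda>l. cd (Suc l) / pi^(Suc l)) \<longlonglongrightarrow> W \<omega> * z i" using LIMSEQ_Suc[OF cdl] .
    moreover have u: "(\<lambda>l. U l / pi^l) \<longlonglongrightarrow> 0" using elim(1) unfolding U_def .
    moreover have d: "(\<lambda>l. D l / pi^l) \<longlonglongrightarrow> 0" using elim(2) unfolding D_def .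
    ultimately show ?thesis unfolding e
      by (intro tendsto_intros) (use pi0 in auto)
  qed
  then have "(\<lambda>l. x (Suc l) / pi^(Suc l)) \<longlonglongrightarrow> sigma2 * Pmat p i j * W \<omega> * z i" by (simp add: ac_simps)
  then have "(\<lambda>l. x l / pi^l) \<longlonglongrightarrow> sigma2 * Pmat p i j * W \<omega> * z i"
    by (rule LIMSEQ_imp_Suc[where f="\<lambda>l. x l / pi^l"])
  from toep[OF pi_gt1 this]
  have "(\<lambda>n. (\<Sum>l\<in>{1..n}. x l) / pi^n) \<longlonglongrightarrow> sigma2 * Pmat p i j * W \<omega> * z i * (pi / (pi - 1))" .
  then show ?case unfolding tree_sum x_def by (simp add: ac_simps)
qed


lemma final2:
  shows "AE \<omega> in M.
            (\<lambda>n. (\<Sum>k \<in> treeT n - treeT 0.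
                      real (delta (2*k) \<omega> * delta (2*k+1) \<omega>) * eps (2*k) \<omega> * eps (2*k+1) \<omega>) / pi ^ n)
              \<longlonglongrightarrow> (rhop * sigma2) * (p 0 1 1 * z 0 + p 1 1 1 * z 1) * (pi / (pi - 1)) * W \<omega>"
  using conv_U2 conv_D2 W_lim
proof eventually_elim
  case (elim \<omega>)
  have pi0: "pi \<noteq> 0" using pi_gt1 by simp
  define y where "y l = (\<Sum>k\<in>{k\<in>genG l. True}. real (delta (2*k) \<omega> * delta (2*k+1) \<omega>) * eps (2*k) \<omega> * eps (2*k+1) \<omega>)" for l
  define U where "U l = (\<Sum>q\<in>genG l. fV (Y q \<omega>) * real (delta (2*q) \<omega> * delta (2*q+1) \<omega>))" for l
  define D where "D l = (\<Sum>k\<in>genG l. real (delta k \<omega>) * (real (fst (zeta k \<omega>) * snd (zeta k \<omega>)) - p (k mod 2) 1 1))" for l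
  define cd where "cd l i = real (card {k \<in> genG l. k mod 2 = i \<and> delta k \<omega> = 1})" for l i
  have ys: "y l = U l + rhop * sigma2 * (D l + (p 0 1 1 * cd l 0 + p 1 1 1 * cd l 1))" for l
  proof -
    have "y l = (\<Sum>k\<in>genG l. fV (Y k \<omega>) * real (delta (2*k) \<omega> * delta (2*k+1) \<omega>)
                    + rhop * sigma2 * real (delta (2*k) \<omega> * delta (2*k+1) \<omega>))"
      unfolding y_def by (intro sum.cong) (auto simp: fV_def Y_def algebra_simps)
    also have "\<dots> = U l + rhop * sigma2 * (\<Sum>k\<in>genG l. real (delta (2*k) \<omega> * delta (2*k+1) \<omega>))"
      unfolding U_def by (simp add: sum.distrib sum_distrib_left)
    also have "(\<Sum>k\<in>genG l. real (delta (2*k) \<omega> * delta (2*k+1) \<omega>))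
        = (\<Sum>k\<in>genG l. real (delta k \<omega>) * (real (fst (zeta k \<omega>) * snd (zeta k \<omega>)) - p (k mod 2) 1 1)
              + p (k mod 2) 1 1 * real (delta k \<omega>))"
    proof (rule sum.cong[OF refl])
      fix k assume "k \<in> genG l"
      then have k1: "k \<ge> 1" using genG_ge1 by auto
      have "delta k \<omega> \<in> {0,1}" by (rule delta_01[OF k1])
      then have dd: "delta k \<omega> * delta k \<omega> = delta k \<omega>" by auto
      have "delta (2*k) \<omega> * delta (2*k+1) \<omega> = delta k \<omega> * (fst (zeta k \<omega>) * snd (zeta k \<omega>))"
        using delta0[OF k1, of \<omega>] delta_1[OF k1, of \<omega>] dd
        by (metis mult.assoc mult.left_commute)
      then show "real (delta (2*k) \<omega> * delta (2*k+1) \<omega>) = real (delta k \<omega>) * (real (fst (zeta k \<omega>) * snd (zeta k \<omega>)) - p (k mod 2) 1 1)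
              + p (k mod 2) 1 1 * real (delta k \<omega>)"
        by (simp add: algebra_simps)
    qed
    also have "\<dots> = D l + (\<Sum>k\<in>genG l. p (k mod 2) 1 1 * real (delta k \<omega>))"
      unfolding D_def by (simp add: sum.distrib)
    also have "(\<Sum>k\<in>genG l. p (k mod 2) 1 1 * real (delta k \<omega>))
        = (\<Sum>k\<in>{k\<in>genG l. k mod 2 = 0}. p (k mod 2) 1 1 * real (delta k \<omega>))
          + (\<Sum>k\<in>{k\<in>genG l. k mod 2 = 1}. p (k mod 2) 1 1 * real (delta k \<omega>))"
      by (rule sum_par) simp
    also have "(\<Sum>k\<in>{k\<in>genG l. k mod 2 = 0}. p (k mod 2) 1 1 * real (delta k \<omega>))
        = p 0 1 1 * (\<Sum>k\<in>{k\<in>genG l. k mod 2 = 0}. real (delta k \<omega>))"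
      by (simp add: sum_distrib_left)
    also have "(\<Sum>k\<in>{k\<in>genG l. k mod 2 = 1}. p (k mod 2) 1 1 * real (delta k \<omega>))
        = p 1 1 1 * (\<Sum>k\<in>{k\<in>genG l. k mod 2 = 1}. real (delta k \<omega>))"
      by (simp add: sum_distrib_left)
    finally have fin: "y l = U l + rhop * sigma2 * (D l + (p 0 1 1 * (\<Sum>k\<in>{k\<in>genG l. k mod 2 = 0}. real (delta k \<omega>))
        + p 1 1 1 * (\<Sum>k\<in>{k\<in>genG l. k mod 2 = 1}. real (delta k \<omega>))))" .
    have cc: "(\<Sum>k\<in>{k\<in>genG l. k mod 2 = i}. real (delta k \<omega>)) = cd l i" for i
      unfolding cd_def by (subst sum_delta_card) (auto dest: genG_ge1 intro!: arg_cong[where f="\<lambda>S. real (card S)"])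
    show ?thesis unfolding fin cc[of 0] cc[of 1] ..
  qed
  have cd0: "(\<lambda>l. cd l 0 / pi^l) \<longlonglongrightarrow> W \<omega> * z 0" using elim(3) unfolding cd_def by auto
  have cd1: "(\<lambda>l. cd l 1 / pi^l) \<longlonglongrightarrow> W \<omega> * z 1" using elim(3) unfolding cd_def by auto
  have u: "(\<lambda>l. U l / pi^l) \<longlonglongrightarrow> 0" using elim(1) unfolding U_def .
  have d: "(\<lambda>l. D l / pi^l) \<longlonglongrightarrow> 0" using elim(2) unfolding D_def .
  have e: "y l / pi^l = U l / pi^l + rhop * sigma2 * (D l / pi^l + (p 0 1 1 * (cd l 0 / pi^l) + p 1 1 1 * (cd l 1 / pi^l)))" for l
    unfolding ys using pi_gt1 by (simp add: field_simps)
  have "(\<lambda>l. y l / pi^l) \<longlonglongrightarrow> 0 + rhop * sigma2 * (0 + (p 0 1 1 * (W \<omega> * z 0) + p 1 1 1 * (W \<omega> * z 1)))"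
    unfolding e by (intro tendsto_intros u d cd0 cd1)
  then have "(\<lambda>l. y l / pi^l) \<longlonglongrightarrow> (rhop * sigma2) * (p 0 1 1 * z 0 + p 1 1 1 * z 1) * W \<omega>"
    by (simp add: algebra_simps)
  from toep[OF pi_gt1 this]
  have "(\<lambda>n. (\<Sum>l\<in>{1..n}. y l) / pi^n) \<longlonglongrightarrow> (rhop * sigma2) * (p 0 1 1 * z 0 + p 1 1 1 * z 1) * W \<omega> * (pi / (pi - 1))" .
  moreover have "(\<Sum>k \<in> treeT n - treeT 0. real (delta (2*k) \<omega> * delta (2*k+1) \<omega>) * eps (2*k) \<omega> * eps (2*k+1) \<omega>)
      = (\<Sum>l\<in>{1..n}. y l)" for n
    using tree_sum[where n=n and P="\<lambda>_. True"] unfolding y_def by simp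
  ultimately show ?case by (simp add: ac_simps)
qed

end


theorem corollary5p6:
  fixes M :: "'a measure"
    and X eps :: "nat \<Rightarrow> 'a \<Rightarrow> real"
    and zeta :: "nat \<Rightarrow> 'a \<Rightarrow> nat \<times> nat"
    and delta :: "nat \<Rightarrow> 'a \<Rightarrow> nat"
    and a b c d sigma2 tau4 kappa8 rhop nu2 lam4 pi :: real
    and p :: "nat \<Rightarrow> nat \<Rightarrow> nat \<Rightarrow> real"
    and z :: "nat \<Rightarrow> real"
    and W :: "'a \<Rightarrow> real"
  assumes prob: "prob_space M"
    \<comment> \<open>BAR process\<close>
    and X_meas: "\<And>k. k \<ge> 1 \<Longrightarrow> X k \<in> borel_measurable M"
    and X1_L8: "integrable M (\<lambda>\<omega>. (X 1 \<omega>) ^ 8)"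
    and BAR0: "\<And>k \<omega>. k \<ge> 1 \<Longrightarrow> X (2*k) \<omega> = a + b * X k \<omega> + eps (2*k) \<omega>"
    and BAR1: "\<And>k \<omega>. k \<ge> 1 \<Longrightarrow> X (2*k+1) \<omega> = c + d * X k \<omega> + eps (2*k+1) \<omega>"
    and bd: "0 < max \<bar>b\<bar> \<bar>d\<bar>" "max \<bar>b\<bar> \<bar>d\<bar> < 1"
    \<comment> \<open>(HN.1)\<close>
    and eps_meas: "\<And>n k. k \<in> genG (Suc n) \<Longrightarrow> eps k \<in> borel_measurable M"
    and eps_L8: "\<And>n k. k \<in> genG (Suc n) \<Longrightarrow> integrable M (\<lambda>\<omega>. (eps k \<omega>) ^ 8)"
    and par_pos: "0 < sigma2" "0 < tau4" "0 < kappa8"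
    and par_corr: "\<bar>rhop\<bar> < 1" "0 \<le> nu2" "nu2 < 1" "0 \<le> lam4" "lam4 < 1"
    and ce1: "\<And>n k. k \<in> genG (Suc n) \<Longrightarrow>
               AE \<omega> in M. real_cond_exp M (natF M X n) (eps k) \<omega> = 0"
    and ce2: "\<And>n k. k \<in> genG (Suc n) \<Longrightarrow>
               AE \<omega> in M. real_cond_exp M (natF M X n) (\<lambda>x. (eps k x)^2) \<omega> = sigma2"
    and ce4: "\<And>n k. k \<in> genG (Suc n) \<Longrightarrow>
               AE \<omega> in M. real_cond_exp M (natF M X n) (\<lambda>x. (eps k x)^4) \<omega> = tau4"
    and ce8: "\<And>n k. k \<in> genG (Suc n) \<Longrightarrow>
               AE \<omega> in M. real_cond_exp M (natF M X n) (\<lambda>x. (eps k x)^8) \<omega> = kappa8"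
    and cc1: "\<And>n k. k \<in> genG n \<Longrightarrow>
               AE \<omega> in M. real_cond_exp M (natF M X n) (\<lambda>x. eps (2*k) x * eps (2*k+1) x) \<omega>
                             = rhop * sigma2"
    and cc2: "\<And>n k. k \<in> genG n \<Longrightarrow>
               AE \<omega> in M. real_cond_exp M (natF M X n)
                             (\<lambda>x. (eps (2*k) x)^2 * (eps (2*k+1) x)^2) \<omega> = nu2 * tau4"
    and cc4: "\<And>n k. k \<in> genG n \<Longrightarrow>
               AE \<omega> in M. real_cond_exp M (natF M X n)
                             (\<lambda>x. (eps (2*k) x)^4 * (eps (2*k+1) x)^4) \<omega> = lam4 * kappa8"
    \<comment> \<open>(HN.2)\<close>
    and HN2: "\<And>n. cond_indep_given M (natF M X n)
                    (\<lambda>k x. (eps (2*k) x, eps (2*k+1) x)) (genG n)"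
    \<comment> \<open>observation process\<close>
    and zeta_val: "\<And>k \<omega>. k \<ge> 1 \<Longrightarrow> zeta k \<omega> \<in> {0,1} \<times> {0,1}"
    and zeta_indep: "prob_space.indep_vars M (\<lambda>_. count_space UNIV) zeta {1..}"
    and zeta_law: "\<And>k j0 j1. k \<ge> 1 \<Longrightarrow> j0 \<in> {0,1} \<Longrightarrow> j1 \<in> {0,1} \<Longrightarrow>
                    measure M {\<omega> \<in> space M. zeta k \<omega> = (j0, j1)} = p (k mod 2) j0 j1"
    and delta1: "\<And>\<omega>. delta 1 \<omega> = 1"
    and delta0: "\<And>k \<omega>. k \<ge> 1 \<Longrightarrow> delta (2*k) \<omega> = delta k \<omega> * fst (zeta k \<omega>)"
    and delta_1: "\<And>k \<omega>. k \<ge> 1 \<Longrightarrow> delta (2*k+1) \<omega> = delta k \<omega> * snd (zeta k \<omega>)"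
    \<comment> \<open>(HO)\<close>
    and P_pos: "\<And>i j. i \<in> {0,1} \<Longrightarrow> j \<in> {0,1} \<Longrightarrow> Pmat p i j > 0"
    and pi_gt1: "pi > 1"
    and pi_spec: "\<And>mu::complex. (of_real (Pmat p 0 0) - mu) * (of_real (Pmat p 1 1) - mu)
                    - of_real (Pmat p 0 1 * Pmat p 1 0) = 0 \<Longrightarrow> cmod mu \<le> pi"
    and z_pos: "z 0 > 0" "z 1 > 0" "z 0 + z 1 = 1"
    and z_eig: "\<And>j. j \<in> {0,1} \<Longrightarrow> z 0 * Pmat p 0 j + z 1 * Pmat p 1 j = pi * z j"
    \<comment> \<open>(HI)\<close>
    and HI: "prob_space.indep_set M
               (sets (sigma (space M) {zeta k -` A \<inter> space M | k A. k \<ge> 1}))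
               (sets (sigma (space M) {X k -` A \<inter> space M | k A. k \<ge> 1 \<and> A \<in> sets borel}))"
    \<comment> \<open>the limit W\<close>
    and W_meas: "W \<in> borel_measurable M"
    and W_nonneg: "\<And>\<omega>. W \<omega> \<ge> 0"
    and W_lim: "AE \<omega> in M. \<forall>i\<in>{0,1}.
                  (\<lambda>n. real (card {k \<in> genG n. k mod 2 = i \<and> delta k \<omega> = 1}) / pi ^ n)
                    \<longlonglongrightarrow> W \<omega> * z i"
  shows "(\<forall>i\<in>{0,1}. \<forall>j\<in>{0,1}. AE \<omega> in M.
            (\<lambda>n. (\<Sum>k \<in> {k \<in> treeT n. k mod 2 = i} - treeT 0.
                      (eps k \<omega>)^2 * real (delta (2*k+j) \<omega>)) / pi ^ n)
              \<longlonglongrightarrow> sigma2 * Pmat p i j * (pi / (pi - 1)) * W \<omega> * z i)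
       \<and> (AE \<omega> in M.
            (\<lambda>n. (\<Sum>k \<in> treeT n - treeT 0.
                      real (delta (2*k) \<omega> * delta (2*k+1) \<omega>) * eps (2*k) \<omega> * eps (2*k+1) \<omega>) / pi ^ n)
              \<longlonglongrightarrow> (rhop * sigma2) * (p 0 1 1 * z 0 + p 1 1 1 * z 1) * (pi / (pi - 1)) * W \<omega>)"
  proof -
  interpret bar M X eps zeta delta a b c d sigma2 tau4 rhop nu2 pi p z W
  proof (rule bar.intro[OF prob], rule bar_axioms.intro)
  qed (fact assms)+
  have f1: "\<forall>i\<in>{0,1}. \<forall>j\<in>{0::nat,1}. AE \<omega> in M.
            (\<lambda>n. (\<Sum>k \<in> {k \<in> treeT n. k mod 2 = i} - treeT 0.
                      (eps k \<omega>)^2 * real (delta (2*k+j) \<omega>)) / pi ^ n)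
              \<longlonglongrightarrow> sigma2 * Pmat p i j * (pi / (pi - 1)) * W \<omega> * z i"
  proof (intro ballI)
    fix i j :: nat assume "i \<in> {0,1}" "j \<in> {0,1}"
    then have "i < 2" "j < 2" by auto
    then show "AE \<omega> in M.
            (\<lambda>n. (\<Sum>k \<in> {k \<in> treeT n. k mod 2 = i} - treeT 0.
                      (eps k \<omega>)^2 * real (delta (2*k+j) \<omega>)) / pi ^ n)
              \<longlonglongrightarrow> sigma2 * Pmat p i j * (pi / (pi - 1)) * W \<omega> * z i"
      by (rule final1)
  qed
  show ?thesis using f1 final2 by blast
qed

end
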